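(* Let $\{(X_i,Y_i)\}_{i\ge 1}$ be a stationary ergodic sequence with values in $\mathbb{R}^d\times\mathbb{R}$ with $E|Y_1|<\infty$; let $(X,Y)$ have the common distribution of the $(X_i,Y_i)$, $\mu$ the distribution of $X$, and suppose the regression function $m(x)=E(Y\mid X=x)$ is Lipschitz continuous with Lipschitz constant $C$ (with respect to the Euclidean norm). Let $L\ge C\sqrt d$ and let $N_n$ be a non-decreasing sequence of positive integers with $N_n\to\infty$. Then, with $S$, $m_L$, $\hat m_{n,L}$ as in the context, $m_L(x)=m(x)$ for all $x\in S$, and consequently: (a) almost surely, for all $x\in S$, $\hat m_{n,L}(x)\to m(x)$; (b) if $S$ is bounded, then almost surely $\sup_{x\in S}|\hat m_{n,L}(x)-m(x)|\to 0$; (c) if either $|Y|\le D<\infty$ almost surely for some (not necessarily known) constant $D$, or $\mu$ has bounded support, then almost surely $\int(\hat m_{n,L}(x)-m(x))^2\mu(dx)\to 0$.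
   Context: For $k\ge 1$, $\mathcal{P}_k$ is a partition of $\mathbb{R}^d$ into cubes of volume $(2^{-k-2})^d$ (side length $2^{-k-2}$), with $\mathcal{P}_{k+1}$ refining $\mathcal{P}_k$; $A_k(x)$ is the cell of $\mathcal{P}_k$ containing $x$. $S=\{x\in\mathbb{R}^d: \mu(A_k(x))>0 \text{ for all } k\ge1\}$. For $x\in S$: $M_k(x)=E(Y\mid X\in A_k(x))$; for $k\ge2$, $\Delta_{k,L}(x)=\mathrm{sign}(M_k(x)-M_{k-1}(x))\min(|M_k(x)-M_{k-1}(x)|,L2^{-k})$; $m_L(x)=M_1(x)+\sum_{k=2}^\infty\Delta_{k,L}(x)$. Estimator: $\hat M_{k,n}(x)=\frac{\sum_{j=1}^n Y_j1_{\{X_j\in A_k(x)\}}}{\sum_{j=1}^n1_{\{X_j\in A_k(x)\}}}$ (set to $0$ if the denominator is $0$); for $k\ge2$, $\hat\Delta_{k,n,L}(x)=\mathrm{sign}(\hat M_{k,n}(x)-\hat M_{k-1,n}(x))\min(|\hat M_{k,n}(x)-\hat M_{k-1,n}(x)|,L2^{-k})$; $\hat m_{n,L}(x)=\hat M_{1,n}(x)+\sum_{k=2}^{N_n}\hat\Delta_{k,n,L}(x)$. *)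

theory Defs
  imports "HOL-Probability.Probability"
begin

text \<open>Dyadic partition: the cell of P_k containing x is the half-open grid cube of
side 2^(-k-2) containing x.\<close>
definition cell :: "nat \<Rightarrow> real^'d \<Rightarrow> (real^'d) set" where
  "cell k x = {y. \<forall>i. \<lfloor>2^(k+2) * (y $ i)\<rfloor> = \<lfloor>2^(k+2) * (x $ i)\<rfloor>}"

definition clip :: "real \<Rightarrow> nat \<Rightarrow> real \<Rightarrow> real" where
  "clip L k t = sgn t * min \<bar>t\<bar> (L / 2^k)"

definition cell_mean :: "'a measure \<Rightarrow> ('a \<Rightarrow> real^'d) \<Rightarrow> ('a \<Rightarrow> real) \<Rightarrow> nat \<Rightarrow> real^'d \<Rightarrow> real" where
  "cell_mean M X Y k x =
     (\<integral>\<omega>. indicator (cell k x) (X \<omega>) * Y \<omega> \<partial>M) / measure M {\<omega>\<in>space M. X \<omega> \<in> cell k x}"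

definition pos_set :: "'a measure \<Rightarrow> ('a \<Rightarrow> real^'d) \<Rightarrow> (real^'d) set" where
  "pos_set M X = {x. \<forall>k\<ge>1. measure M {\<omega>\<in>space M. X \<omega> \<in> cell k x} > 0}"

definition m_L :: "'a measure \<Rightarrow> ('a \<Rightarrow> real^'d) \<Rightarrow> ('a \<Rightarrow> real) \<Rightarrow> real \<Rightarrow> real^'d \<Rightarrow> real" where
  "m_L M X Y L x = cell_mean M X Y 1 x +
     (\<Sum>k. clip L (k+2) (cell_mean M X Y (k+2) x - cell_mean M X Y (k+1) x))"

text \<open>Empirical cell mean from the first n samples (sample j+1 is (X j, Y j));
  division by zero yields 0, matching the convention of the paper.\<close>
definition emp_mean :: "(nat \<Rightarrow> 'a \<Rightarrow> real^'d) \<Rightarrow> (nat \<Rightarrow> 'a \<Rightarrow> real) \<Rightarrow> nat \<Rightarrow> nat \<Rightarrow> 'a \<Rightarrow> real^'d \<Rightarrow> real" where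
  "emp_mean X Y k n \<omega> x =
     (\<Sum>j<n. Y j \<omega> * indicator (cell k x) (X j \<omega>)) / (\<Sum>j<n. indicator (cell k x) (X j \<omega>))"

definition m_hat :: "(nat \<Rightarrow> 'a \<Rightarrow> real^'d) \<Rightarrow> (nat \<Rightarrow> 'a \<Rightarrow> real) \<Rightarrow> real \<Rightarrow> nat \<Rightarrow> nat \<Rightarrow> 'a \<Rightarrow> real^'d \<Rightarrow> real" where
  "m_hat X Y L N n \<omega> x = emp_mean X Y 1 n \<omega> x +
     (\<Sum>k\<in>{2..N}. clip L k (emp_mean X Y k n \<omega> x - emp_mean X Y (k-1) n \<omega> x))"

definition proc_law :: "'a measure \<Rightarrow> (nat \<Rightarrow> 'a \<Rightarrow> 'b::topological_space) \<Rightarrow> (nat \<Rightarrow> 'b) measure" where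
  "proc_law M Z = distr M (PiM UNIV (\<lambda>_. borel)) (\<lambda>\<omega> i. Z i \<omega>)"

definition seq_shift :: "(nat \<Rightarrow> 'b) \<Rightarrow> (nat \<Rightarrow> 'b)" where
  "seq_shift f = (\<lambda>i. f (Suc i))"

definition stationary_process :: "'a measure \<Rightarrow> (nat \<Rightarrow> 'a \<Rightarrow> 'b::topological_space) \<Rightarrow> bool" where
  "stationary_process M Z \<longleftrightarrow> (\<forall>i. Z i \<in> borel_measurable M) \<and>
     distr (proc_law M Z) (PiM UNIV (\<lambda>_. borel)) seq_shift = proc_law M Z"

definition ergodic_process :: "'a measure \<Rightarrow> (nat \<Rightarrow> 'a \<Rightarrow> 'b::topological_space) \<Rightarrow> bool" where
  "ergodic_process M Z \<longleftrightarrow>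
     (\<forall>A \<in> sets (PiM UNIV (\<lambda>_. borel :: 'b measure)). seq_shift -` A = A \<longrightarrow>
        measure (proc_law M Z) A = 0 \<or> measure (proc_law M Z) A = 1)"

end

theory Submission
  imports Defs
begin

definition psum :: "('b \<Rightarrow> 'b) \<Rightarrow> ('b \<Rightarrow> real) \<Rightarrow> nat \<Rightarrow> 'b \<Rightarrow> real" where
  "psum T g n z = (\<Sum>j<n. g ((T^^j) z))"

fun maxS :: "('b \<Rightarrow> 'b) \<Rightarrow> ('b \<Rightarrow> real) \<Rightarrow> nat \<Rightarrow> 'b \<Rightarrow> real" where
  "maxS T g 0 z = 0"
| "maxS T g (Suc n) z = max (maxS T g n z) (psum T g (Suc n) z)"

lemma psum_0[simp]: "psum T g 0 z = 0" by (simp add: psum_def)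

lemma psum_Suc_shift: "psum T g (Suc n) z = g z + psum T g n (T z)"
  unfolding psum_def by (subst sum.lessThan_Suc_shift) (simp add: funpow_Suc_right del: funpow.simps)

lemma maxS_nonneg: "0 \<le> maxS T g n z"
  by (induction n) auto

lemma maxS_ge: "k \<le> n \<Longrightarrow> psum T g k z \<le> maxS T g n z"
proof (induction n)
  case 0 then have "k = 0" by simp
  then show ?case by simp
next
  case (Suc n)
  show ?case
  proof (cases "k = Suc n")
    case True then show ?thesis by simp
  next
    case False then have "k \<le> n" using Suc.prems by simp
    then have "psum T g k z \<le> maxS T g n z" by (rule Suc.IH)
    then show ?thesis by simp
  qed
qed

lemma maxS_attained: "\<exists>k\<le>n. maxS T g n z = psum T g k z"
proof (induction n)
  case 0 show ?case by (rule exI[of _ 0]) simp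
next
  case (Suc n)
  from Suc.IH obtain k where k1: "k \<le> n" and k2: "maxS T g n z = psum T g k z" by metis
  show ?case
  proof (cases "maxS T g n z \<le> psum T g (Suc n) z")
    case True
    then have "maxS T g (Suc n) z = psum T g (Suc n) z" by (simp add: max_def)
    then show ?thesis by (intro exI[of _ "Suc n"] conjI) simp_all
  next
    case False
    then have "maxS T g (Suc n) z = psum T g k z" using k2 by (simp add: max_def)
    moreover have "k \<le> Suc n" using k1 by simp
    ultimately show ?thesis by (intro exI[of _ k] conjI) simp_all
  qed
qed

lemma maxS_pos_iff: "0 < maxS T g n z \<longleftrightarrow> (\<exists>k\<le>n. 0 < psum T g k z)"
proof
  assume "0 < maxS T g n z"
  moreover obtain k where "k \<le> n" "maxS T g n z = psum T g k z" using maxS_attained by metis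
  ultimately show "\<exists>k\<le>n. 0 < psum T g k z" by auto
next
  assume "\<exists>k\<le>n. 0 < psum T g k z"
  then obtain k where "k \<le> n" "0 < psum T g k z" by blast
  moreover have "psum T g k z \<le> maxS T g n z" using \<open>k \<le> n\<close> by (rule maxS_ge)
  ultimately show "0 < maxS T g n z" by linarith
qed

lemma maxS_key:
  assumes "0 < maxS T g n z"
  shows "maxS T g n z \<le> g z + maxS T g n (T z)"
proof -
  obtain k where k: "k \<le> n" "maxS T g n z = psum T g k z" using maxS_attained by metis
  have "k \<noteq> 0"
  proof
    assume "k = 0" with assms k show False by simp
  qed
  then obtain k' where "k = Suc k'" by (cases k) auto
  with k have "maxS T g n z = g z + psum T g k' (T z)" by (simp add: psum_Suc_shift)
  also have "\<dots> \<le> g z + maxS T g n (T z)" using k \<open>k = Suc k'\<close> by (intro add_left_mono maxS_ge) auto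
  finally show ?thesis .
qed

locale mpt = prob_space P for P :: "'b measure" +
  fixes T :: "'b \<Rightarrow> 'b"
  assumes T_meas[measurable]: "T \<in> measurable P P"
    and T_pres: "distr P P T = P"
begin

lemma Tn_meas[measurable]: "(T^^j) \<in> measurable P P"
proof (induction j)
  case 0 then show ?case by simp
next
  case (Suc j)
  then show ?case by (simp add: funpow_Suc_right del: funpow.simps) (rule measurable_compose[OF T_meas Suc])
qed

lemma Tn_pres: "distr P P (T^^j) = P"
proof (induction j)
  case 0 then show ?case by (simp add: distr_id2)
next
  case (Suc j)
  have "distr P P (T^^Suc j) = distr (distr P P T) P (T^^j)"
    by (simp add: funpow_Suc_right distr_distr del: funpow.simps)
  also have "\<dots> = P" using Suc by (simp add: T_pres)
  finally show ?case .
qed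

lemma integrable_Tn:
  fixes g :: "'b \<Rightarrow> real"
  assumes "integrable P g" shows "integrable P (\<lambda>z. g ((T^^j) z))"
proof -
  have gm: "g \<in> borel_measurable P" using assms by auto
  have "integrable (distr P P (T^^j)) g" using assms Tn_pres by simp
  then show ?thesis using integrable_distr_eq[OF Tn_meas, of g j] gm by simp
qed

lemma integral_Tn:
  fixes g :: "'b \<Rightarrow> real"
  assumes "integrable P g" shows "(\<integral>z. g ((T^^j) z) \<partial>P) = (\<integral>z. g z \<partial>P)"
proof -
  have gm: "g \<in> borel_measurable P" using assms by auto
  have "(\<integral>z. g ((T^^j) z) \<partial>P) = (\<integral>z. g z \<partial>distr P P (T^^j))"
    using integral_distr[OF Tn_meas gm] by simp
  then show ?thesis by (simp add: Tn_pres)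
qed

lemma psum_meas[measurable]:
  fixes g :: "'b \<Rightarrow> real"
  assumes g: "g \<in> borel_measurable P" shows "psum T g n \<in> borel_measurable P"
proof -
  have "(\<lambda>z. \<Sum>j<n. g ((T^^j) z)) \<in> borel_measurable P"
    by (intro borel_measurable_sum measurable_compose[OF Tn_meas g])
  then show ?thesis unfolding psum_def .
qed

lemma integrable_psum: "integrable P g \<Longrightarrow> integrable P (psum T g n)"
  unfolding psum_def by (rule Bochner_Integration.integrable_sum) (rule integrable_Tn)

lemma maxS_0': "maxS T g 0 = (\<lambda>_. 0)" by (rule ext) simp
lemma maxS_Suc': "maxS T g (Suc n) = (\<lambda>z. max (maxS T g n z) (psum T g (Suc n) z))" by (rule ext) simp

lemma maxS_meas[measurable]: assumes "g \<in> borel_measurable P" shows "maxS T g n \<in> borel_measurable P"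
proof (induction n)
  case 0 show ?case unfolding maxS_0' by simp
next
  case (Suc n) show ?case unfolding maxS_Suc' by (intro borel_measurable_max Suc psum_meas assms)
qed

lemma integrable_maxS: assumes "integrable P g" shows "integrable P (maxS T g n)"
proof (induction n)
  case 0 show ?case unfolding maxS_0' by simp
next
  case (Suc n) show ?case unfolding maxS_Suc' by (intro integrable_max Suc integrable_psum assms)
qed

lemma integrable_ind_mult:
  fixes g :: "'b \<Rightarrow> real"
  assumes "integrable P g" "A \<in> sets P" shows "integrable P (\<lambda>z. indicator A z * g z)"
  using integrable_real_mult_indicator[OF assms(2,1)] by (simp add: mult.commute)

lemma maximal_n:
  assumes g: "integrable P g"
  shows "0 \<le> (\<integral>z. indicator {z\<in>space P. 0 < maxS T g n z} z * g z \<partial>P)"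
proof -
  have [measurable]: "g \<in> borel_measurable P" using g by auto
  have ineq: "maxS T g n z - maxS T g n (T z) \<le> indicator {z\<in>space P. 0 < maxS T g n z} z * g z"
    if "z \<in> space P" for z
  proof (cases "0 < maxS T g n z")
    case True then show ?thesis using maxS_key[OF True] that by simp
  next
    case False then show ?thesis using maxS_nonneg[of T g n z] maxS_nonneg[of T g n "T z"] by auto
  qed
  have iT: "integrable P (\<lambda>z. maxS T g n (T z))"
    using integrable_Tn[OF integrable_maxS[OF g], where j=1] by simp
  have "0 = (\<integral>z. maxS T g n z \<partial>P) - (\<integral>z. maxS T g n (T z) \<partial>P)"
    using integral_Tn[OF integrable_maxS[OF g], where j=1] by simp
  also have "\<dots> = (\<integral>z. maxS T g n z - maxS T g n (T z) \<partial>P)"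
    by (rule Bochner_Integration.integral_diff[OF integrable_maxS[OF g] iT, symmetric])
  also have "\<dots> \<le> (\<integral>z. indicator {z\<in>space P. 0 < maxS T g n z} z * g z \<partial>P)"
  proof (rule integral_mono)
    show "integrable P (\<lambda>z. maxS T g n z - maxS T g n (T z))"
      by (rule Bochner_Integration.integrable_diff[OF integrable_maxS[OF g] iT])
    have "{z\<in>space P. 0 < maxS T g n z} \<in> sets P" by measurable
    then show "integrable P (\<lambda>z. indicator {z\<in>space P. 0 < maxS T g n z} z * g z)"
      by (rule integrable_ind_mult[OF g])
  qed (rule ineq)
  finally show ?thesis .
qed

lemma maximal:
  assumes g: "integrable P g"
  shows "0 \<le> (\<integral>z. indicator {z\<in>space P. \<exists>n. 0 < psum T g n z} z * g z \<partial>P)"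
proof -
  have [measurable]: "g \<in> borel_measurable P" using g by auto
  let ?G = "{z\<in>space P. \<exists>n. 0 < psum T g n z}"
  let ?s = "\<lambda>n z. indicator {z\<in>space P. 0 < maxS T g n z} z * g z"
  have lim: "(\<lambda>n. \<integral>z. ?s n z \<partial>P) \<longlonglongrightarrow> (\<integral>z. indicator ?G z * g z \<partial>P)"
  proof (rule integral_dominated_convergence[where w="\<lambda>z. norm (g z)"])
    show "AE z in P. (\<lambda>n. ?s n z) \<longlonglongrightarrow> indicator ?G z * g z"
    proof (rule AE_I2)
      fix z assume z: "z \<in> space P"
      show "(\<lambda>n. ?s n z) \<longlonglongrightarrow> indicator ?G z * g z"
      proof (cases "\<exists>n. 0 < psum T g n z")
        case True
        then obtain n0 where "0 < psum T g n0 z" by auto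
        have "eventually (\<lambda>n. ?s n z = indicator ?G z * g z) sequentially"
          unfolding eventually_sequentially
        proof (intro exI[of _ n0] allI impI)
          fix n assume "n0 \<le> n"
          then have "0 < maxS T g n z" using \<open>0 < psum T g n0 z\<close> maxS_pos_iff by metis
          moreover have "z \<in> ?G" using z \<open>0 < psum T g n0 z\<close> by auto
          ultimately show "?s n z = indicator ?G z * g z" using z by simp
        qed
        then show ?thesis by (rule tendsto_eventually)
      next
        case False
        then have "\<And>n. \<not> 0 < maxS T g n z" by (simp add: maxS_pos_iff)
        then have h: "\<And>n. ?s n z = indicator ?G z * g z" using False by (auto simp: indicator_def)
        have eq: "(\<lambda>n. ?s n z) = (\<lambda>n. indicator ?G z * g z)" by (intro ext) (rule h)
        show ?thesis unfolding eq by (rule tendsto_const)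
      qed
    qed
  next
    show "(\<lambda>z. indicator ?G z * g z) \<in> borel_measurable P" by measurable
  next
    fix n show "?s n \<in> borel_measurable P" by measurable
  next
    show "integrable P (\<lambda>z. norm (g z))" using g by (rule integrable_norm)
  next
    fix n show "AE z in P. norm (?s n z) \<le> norm (g z)"
      by (intro AE_I2) (simp add: indicator_def abs_mult)
  qed
  show ?thesis
    by (rule LIMSEQ_le_const[OF lim]) (auto intro: maximal_n[OF g])
qed

end


lemma (in mpt) T_space: "z \<in> space P \<Longrightarrow> T z \<in> space P"
  using T_meas by (rule measurable_space)

lemma psum_diff_const: "psum T (\<lambda>z. f z - b) n z = psum T f n z - real n * b"
  unfolding psum_def by (simp add: sum_subtractf)

lemma psum_neg: "psum T (\<lambda>z. - f z) n z = - psum T f n z"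
  unfolding psum_def by (simp add: sum_negf)

locale erg = mpt +
  assumes ergodic: "\<forall>A\<in>sets P. T -` A \<inter> space P = A \<longrightarrow> prob A = 0 \<or> prob A = 1"
begin

lemma birkhoff_upper:
  fixes f :: "_ \<Rightarrow> real"
  assumes f: "integrable P f" and a: "expectation f < a"
  shows "AE z in P. eventually (\<lambda>n. psum T f n z / real n < a) sequentially"
proof -
  define b where "b = (a + expectation f)/2"
  define g where "g = (\<lambda>z. f z - b)"
  have ig: "integrable P g" unfolding g_def using f by simp
  have [measurable]: "g \<in> borel_measurable P" using ig by auto
  have psum_g: "\<And>n z. psum T g n z = psum T f n z - real n * b"
    unfolding g_def by (rule psum_diff_const)
  define F where "F = {z\<in>space P. \<forall>B::nat. \<exists>n. real B < psum T g n z}"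
  have Fm: "F \<in> sets P" unfolding F_def by measurable
  have Finv: "T -` F \<inter> space P = F"
  proof (intro equalityI subsetI)
    fix z assume z: "z \<in> T -` F \<inter> space P"
    then have Tz: "T z \<in> F" and zs: "z \<in> space P" by auto
    show "z \<in> F" unfolding F_def
    proof (intro CollectI conjI zs allI)
      fix B :: nat
      have "\<forall>B::nat. \<exists>n. real B < psum T g n (T z)" using Tz unfolding F_def by simp
      then have "\<exists>n. real (nat \<lceil>real B + \<bar>g z\<bar>\<rceil>) < psum T g n (T z)" by (rule spec)
      then obtain n where n: "real (nat \<lceil>real B + \<bar>g z\<bar>\<rceil>) < psum T g n (T z)" ..
      have c: "real B + \<bar>g z\<bar> \<le> real (nat \<lceil>real B + \<bar>g z\<bar>\<rceil>)" by (rule real_nat_ceiling_ge)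
      have "real B < psum T g (Suc n) z" unfolding psum_Suc_shift using n c by linarith
      then show "\<exists>n. real B < psum T g n z" by (rule exI)
    qed
  next
    fix z assume z: "z \<in> F"
    then have zs: "z \<in> space P" by (simp add: F_def)
    have "T z \<in> F" unfolding F_def
    proof (intro CollectI conjI allI)
      show "T z \<in> space P" using zs by (rule T_space)
      fix B :: nat
      have "\<forall>B::nat. \<exists>n. real B < psum T g n z" using z unfolding F_def by simp
      then have "\<exists>n. real (nat \<lceil>real B + \<bar>g z\<bar>\<rceil>) < psum T g n z" by (rule spec)
      then obtain n where n: "real (nat \<lceil>real B + \<bar>g z\<bar>\<rceil>) < psum T g n z" ..
      have c: "real B + \<bar>g z\<bar> \<le> real (nat \<lceil>real B + \<bar>g z\<bar>\<rceil>)" by (rule real_nat_ceiling_ge)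
      have "n \<noteq> 0"
      proof
        assume "n = 0" with n c show False by simp
      qed
      then obtain m where m: "n = Suc m" by (cases n) auto
      have "real B < psum T g m (T z)" using n c psum_Suc_shift[of T g m z] unfolding m by linarith
      then show "\<exists>n. real B < psum T g n (T z)" by (rule exI)
    qed
    then show "z \<in> T -` F \<inter> space P" using zs by simp
  qed
  have "prob F = 0"
  proof (rule ccontr)
    assume "prob F \<noteq> 0"
    then have pF: "prob F = 1" using ergodic Fm Finv by auto
    define G where "G = {z\<in>space P. \<exists>n. 0 < psum T g n z}"
    have Gm[measurable]: "G \<in> sets P" unfolding G_def by measurable
    have FG: "F \<subseteq> G"
    proof
      fix z assume "z \<in> F"
      then have "z \<in> space P" "\<forall>B::nat. \<exists>n. real B < psum T g n z" unfolding F_def by auto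
      moreover from this(2) have "\<exists>n. real (0::nat) < psum T g n z" by (rule spec)
      ultimately show "z \<in> G" unfolding G_def by simp
    qed
    have "prob F \<le> prob G" using FG Gm by (rule finite_measure_mono)
    then have pG: "prob G = 1" using pF prob_le_1[of G] by linarith
    have "prob (space P - G) = 0" using prob_compl[OF Gm] pG by simp
    then have "space P - G \<in> null_sets P" using Gm by (simp add: null_sets_def emeasure_eq_measure)
    then have "AE z in P. z \<notin> space P - G" by (rule AE_not_in)
    then have AEG: "AE z in P. z \<in> G" by (rule AE_mp) (intro AE_I2 impI, simp)
    have m1: "(\<lambda>z. indicator G z * g z) \<in> borel_measurable P" by measurable
    have gm: "g \<in> borel_measurable P" by measurable
    have "AE z in P. indicator G z * g z = g z" using AEG by (rule AE_mp) (intro AE_I2 impI, simp)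
    then have "(\<integral>z. indicator G z * g z \<partial>P) = (\<integral>z. g z \<partial>P)"
      by (rule integral_cong_AE[OF m1 gm])
    moreover have "0 \<le> (\<integral>z. indicator G z * g z \<partial>P)" using maximal[OF ig] unfolding G_def .
    moreover have "(\<integral>z. g z \<partial>P) = expectation f - b" unfolding g_def
      using f by (simp add: Bochner_Integration.integral_diff prob_space)
    ultimately have "0 \<le> expectation f - b" by simp
    then show False using a b_def by (simp add: field_simps)
  qed
  then have "F \<in> null_sets P" using Fm by (simp add: null_sets_def emeasure_eq_measure)
  then have "AE z in P. z \<notin> F" by (rule AE_not_in)
  then show ?thesis
  proof (rule AE_mp, intro AE_I2 impI)
    fix z assume zs: "z \<in> space P" and zF: "z \<notin> F"
    then obtain B :: nat where B: "\<And>n. psum T g n z \<le> real B" unfolding F_def by (auto simp: not_less)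
    have ab: "0 < a - b" using a unfolding b_def by (simp add: field_simps)
    show "eventually (\<lambda>n. psum T f n z / real n < a) sequentially" unfolding eventually_sequentially
    proof (intro exI[of _ "Suc (nat \<lceil>real B / (a - b)\<rceil>)"] allI impI)
      fix n assume n: "Suc (nat \<lceil>real B / (a - b)\<rceil>) \<le> n"
      have c: "real B / (a - b) \<le> real (nat \<lceil>real B / (a - b)\<rceil>)" by (rule real_nat_ceiling_ge)
      have n1: "real (nat \<lceil>real B / (a - b)\<rceil>) + 1 \<le> real n" using n by linarith
      have npos: "0 < real n" using n by simp
      have "real B / (a - b) < real n" using c n1 by linarith
      then have "real B < real n * (a - b)" using ab by (simp add: divide_less_eq)
      moreover have "psum T f n z = psum T g n z + real n * b" using psum_g[of n z] by simp
      ultimately have "psum T f n z < real n * a" using B[of n] by (simp add: algebra_simps)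
      then show "psum T f n z / real n < a" using npos by (simp add: divide_less_eq mult.commute)
    qed
  qed
qed

lemma birkhoff:
  fixes f :: "_ \<Rightarrow> real"
  assumes f: "integrable P f"
  shows "AE z in P. (\<lambda>n. psum T f n z / real n) \<longlonglongrightarrow> expectation f"
proof -
  have up: "AE z in P. \<forall>k::nat. eventually (\<lambda>n. psum T f n z / real n < expectation f + 1 / real (Suc k)) sequentially"
    by (subst AE_all_countable) (intro allI birkhoff_upper f, simp)
  have f': "integrable P (\<lambda>z. - f z)" using f by simp
  have lo: "AE z in P. \<forall>k::nat. eventually (\<lambda>n. psum T (\<lambda>z. - f z) n z / real n < expectation (\<lambda>z. - f z) + 1 / real (Suc k)) sequentially"
    by (subst AE_all_countable) (intro allI birkhoff_upper f', simp)
  have ef: "expectation (\<lambda>z. - f z) = - expectation f" by simp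
  show ?thesis using up lo
  proof eventually_elim
    case (elim z)
    show ?case
    proof (rule tendstoI)
      fix e :: real assume e: "0 < e"
      obtain k where k: "inverse (real (Suc k)) < e" using reals_Archimedean[OF e] by metis
      have "eventually (\<lambda>n. psum T f n z / real n < expectation f + 1 / real (Suc k)
          \<and> psum T (\<lambda>z. - f z) n z / real n < expectation (\<lambda>z. - f z) + 1 / real (Suc k)) sequentially"
        using elim by (intro eventually_conj) auto
      then show "eventually (\<lambda>n. dist (psum T f n z / real n) (expectation f) < e) sequentially"
      proof (rule eventually_mono)
        fix n assume h: "psum T f n z / real n < expectation f + 1 / real (Suc k)
          \<and> psum T (\<lambda>z. - f z) n z / real n < expectation (\<lambda>z. - f z) + 1 / real (Suc k)"
        then have h1: "psum T f n z / real n < expectation f + 1 / real (Suc k)"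
          and h2: "- (psum T f n z / real n) < - expectation f + 1 / real (Suc k)"
          unfolding psum_neg ef by auto
        have "1 / real (Suc k) < e" using k by (simp add: inverse_eq_divide)
        then show "dist (psum T f n z / real n) (expectation f) < e"
          using h1 h2 unfolding dist_real_def by linarith
      qed
    qed
  qed
qed

end

lemma seq_shift_funpow: "(seq_shift ^^ j) z = (\<lambda>i. z (i + j))"
proof (induction j arbitrary: z)
  case 0 then show ?case by simp
next
  case (Suc j) then show ?case by (simp add: funpow_Suc_right seq_shift_def del: funpow.simps)
qed

lemma seq_shift_meas:
  "seq_shift \<in> measurable (PiM UNIV (\<lambda>_. B)) (PiM UNIV (\<lambda>_. B))"
proof -
  have "(\<lambda>f i. f (Suc i)) \<in> measurable (PiM UNIV (\<lambda>_. B)) (PiM UNIV (\<lambda>_. B))"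
    by (rule measurable_PiM_single') (auto simp: space_PiM)
  then show ?thesis unfolding seq_shift_def[abs_def] .
qed

lemma proc_map_meas:
  assumes "\<And>i. Z i \<in> borel_measurable M"
  shows "(\<lambda>\<omega> i. Z i \<omega>) \<in> measurable M (PiM UNIV (\<lambda>_. borel))"
  by (rule measurable_PiM_single') (auto simp: space_PiM assms)

lemma erg_proc:
  fixes Z :: "nat \<Rightarrow> 'a \<Rightarrow> 'b::topological_space"
  assumes M: "prob_space M" and st: "stationary_process M Z" and er: "ergodic_process M Z"
  shows "erg (proc_law M Z) seq_shift"
proof -
  have Zm: "\<And>i. Z i \<in> borel_measurable M" using st unfolding stationary_process_def by auto
  have pm: "(\<lambda>\<omega> i. Z i \<omega>) \<in> measurable M (PiM UNIV (\<lambda>_. borel))" by (rule proc_map_meas[OF Zm])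
  have sets_P: "sets (proc_law M Z) = sets (PiM UNIV (\<lambda>_. borel :: 'b measure))"
    unfolding proc_law_def by simp
  have space_P: "space (proc_law M Z) = UNIV"
    unfolding proc_law_def by (simp add: space_PiM)
  have ps: "prob_space (proc_law M Z)"
    unfolding proc_law_def using prob_space.prob_space_distr[OF M pm] .
  have Tm: "seq_shift \<in> measurable (proc_law M Z) (proc_law M Z)"
    using seq_shift_meas[of "borel :: 'b measure"] by (simp add: measurable_cong_sets[OF sets_P sets_P])
  have "distr (proc_law M Z) (proc_law M Z) seq_shift = distr (proc_law M Z) (PiM UNIV (\<lambda>_. borel)) seq_shift"
    by (rule distr_cong) (simp_all add: sets_P)
  also have "\<dots> = proc_law M Z" using st unfolding stationary_process_def by simp
  finally have Tp: "distr (proc_law M Z) (proc_law M Z) seq_shift = proc_law M Z" .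
  show ?thesis
  proof (rule erg.intro)
    show "mpt (proc_law M Z) seq_shift"
      by (intro mpt.intro ps mpt_axioms.intro Tm Tp)
    show "erg_axioms (proc_law M Z) seq_shift"
      using er unfolding erg_axioms_def ergodic_process_def sets_P space_P by simp
  qed
qed

lemma ergodic_avg:
  fixes Z :: "nat \<Rightarrow> 'a \<Rightarrow> 'b::topological_space" and h :: "'b \<Rightarrow> real"
  assumes M: "prob_space M" and st: "stationary_process M Z" and er: "ergodic_process M Z"
    and hm: "h \<in> borel_measurable borel" and hi: "integrable M (\<lambda>\<omega>. h (Z 0 \<omega>))"
  shows "AE \<omega> in M. (\<lambda>n. (\<Sum>j<n. h (Z j \<omega>)) / real n) \<longlonglongrightarrow> (\<integral>\<omega>. h (Z 0 \<omega>) \<partial>M)"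
proof -
  interpret erg "proc_law M Z" seq_shift by (rule erg_proc[OF M st er])
  have Zm: "\<And>i. Z i \<in> borel_measurable M" using st unfolding stationary_process_def by auto
  have pm: "(\<lambda>\<omega> i. Z i \<omega>) \<in> measurable M (PiM UNIV (\<lambda>_. borel))" by (rule proc_map_meas[OF Zm])
  define f where "f = (\<lambda>z::nat \<Rightarrow> 'b. h (z 0))"
  have fm: "f \<in> borel_measurable (PiM UNIV (\<lambda>_. borel))" unfolding f_def using hm by measurable
  have fi: "integrable (proc_law M Z) f"
    unfolding proc_law_def using integrable_distr_eq[OF pm fm] hi by (simp add: f_def)
  have fe: "(\<integral>z. f z \<partial>proc_law M Z) = (\<integral>\<omega>. h (Z 0 \<omega>) \<partial>M)"
    unfolding proc_law_def using integral_distr[OF pm fm] by (simp add: f_def)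
  have ps: "\<And>n z. psum seq_shift f n z = (\<Sum>j<n. h (z j))"
    unfolding psum_def f_def seq_shift_funpow by simp
  have "AE z in proc_law M Z. (\<lambda>n. psum seq_shift f n z / real n) \<longlonglongrightarrow> (\<integral>z. f z \<partial>proc_law M Z)"
    by (rule birkhoff[OF fi])
  then have "AE z in distr M (PiM UNIV (\<lambda>_. borel)) (\<lambda>\<omega> i. Z i \<omega>). (\<lambda>n. (\<Sum>j<n. h (z j)) / real n) \<longlonglongrightarrow> (\<integral>\<omega>. h (Z 0 \<omega>) \<partial>M)"
    unfolding ps fe unfolding proc_law_def .
  from AE_distrD[OF pm this] show ?thesis by simp
qed

lemma stationary_marginal:
  fixes Z :: "nat \<Rightarrow> 'a \<Rightarrow> 'b::topological_space"
  assumes M: "prob_space M" and st: "stationary_process M Z" and er: "ergodic_process M Z"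
    and Q: "{x. Q x} \<in> sets borel" and AE0: "AE \<omega> in M. Q (Z 0 \<omega>)"
  shows "AE \<omega> in M. Q (Z j \<omega>)"
proof -
  interpret erg "proc_law M Z" seq_shift by (rule erg_proc[OF M st er])
  have Zm: "\<And>i. Z i \<in> borel_measurable M" using st unfolding stationary_process_def by auto
  have pm: "(\<lambda>\<omega> i. Z i \<omega>) \<in> measurable M (PiM UNIV (\<lambda>_. borel))" by (rule proc_map_meas[OF Zm])
  have Qm: "{z \<in> space (PiM UNIV (\<lambda>_. borel)). Q (z 0)} \<in> sets (PiM UNIV (\<lambda>_. borel :: 'b measure))"
  proof -
    have "{z \<in> space (PiM UNIV (\<lambda>_. borel)). Q (z 0)} = (\<lambda>z. z 0) -` {x. Q x} \<inter> space (PiM UNIV (\<lambda>_. borel :: 'b measure))"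
      by auto
    also have "\<dots> \<in> sets (PiM UNIV (\<lambda>_. borel :: 'b measure))"
      by (rule measurable_sets[OF measurable_component_singleton[of 0 UNIV "\<lambda>_. borel"] Q]) simp
    finally show ?thesis .
  qed
  have "AE z in proc_law M Z. Q (z 0)"
    unfolding proc_law_def using AE_distr_iff[OF pm Qm] AE0 by simp
  moreover have "distr (proc_law M Z) (proc_law M Z) (seq_shift ^^ j) = proc_law M Z" by (rule Tn_pres)
  ultimately have "AE z in distr (proc_law M Z) (proc_law M Z) (seq_shift ^^ j). Q (z 0)"
    by (simp only:)
  from AE_distrD[OF Tn_meas this] have "AE z in proc_law M Z. Q (z j)"
    by (simp add: seq_shift_funpow)
  then show ?thesis unfolding proc_law_def by (rule AE_distrD[OF pm])
qed

definition key :: "nat \<Rightarrow> real^'d \<Rightarrow> ('d \<Rightarrow> int)" where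
  "key k x = (\<lambda>i. \<lfloor>2^(k+2) * (x $ i)\<rfloor>)"

lemma cell_key: "cell k x = {y. key k y = key k x}"
  unfolding cell_def key_def by (auto simp: fun_eq_iff)

lemma cell_sym: "y \<in> cell k x \<longleftrightarrow> x \<in> cell k y"
  unfolding cell_key by auto

lemma cell_self: "x \<in> cell k x"
  unfolding cell_key by auto

lemma cell_borel[measurable]: "cell k x \<in> sets borel"
  unfolding cell_def by measurable

lemma cell_eqI: "key k x = key k x' \<Longrightarrow> cell k x = cell k x'"
  unfolding cell_key by simp

lemma floor_eq_close: "\<lfloor>a::real\<rfloor> = \<lfloor>b\<rfloor> \<Longrightarrow> \<bar>a - b\<bar> < 1"
proof -
  assume h: "\<lfloor>a\<rfloor> = \<lfloor>b\<rfloor>"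
  have f1: "of_int \<lfloor>a\<rfloor> \<le> a" "a < of_int \<lfloor>a\<rfloor> + 1" "of_int \<lfloor>b\<rfloor> \<le> b" "b < of_int \<lfloor>b\<rfloor> + 1"
    by linarith+
  have "real_of_int \<lfloor>a\<rfloor> = real_of_int \<lfloor>b\<rfloor>" using h by simp
  with f1 have "a - b < 1" "b - a < 1" by linarith+
  then show ?thesis by (simp add: abs_less_iff)
qed

lemma norm_vec_bound:
  fixes v :: "real^'d"
  assumes "\<And>i. \<bar>v $ i\<bar> \<le> s"
  shows "norm v \<le> sqrt (real CARD('d)) * s"
proof -
  have s0: "0 \<le> s" using assms[of undefined] by linarith
  have "norm v = L2_set (\<lambda>i. \<bar>v $ i\<bar>) UNIV" unfolding norm_vec_def by simp
  also have "\<dots> \<le> L2_set (\<lambda>i::'d. s) UNIV" by (rule L2_set_mono) (auto intro: assms)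
  also have "\<dots> = sqrt (real CARD('d) * s^2)" unfolding L2_set_def by simp
  also have "\<dots> = sqrt (real CARD('d)) * s" using s0 by (simp add: real_sqrt_mult)
  finally show ?thesis .
qed

lemma cell_dist:
  fixes x y :: "real^'d"
  assumes "y \<in> cell k x"
  shows "dist y x \<le> sqrt (real CARD('d)) / 2^(k+2)"
proof -
  have "\<bar>(y - x) $ i\<bar> \<le> 1 / 2^(k+2)" for i
  proof -
    have "\<lfloor>2^(k+2) * (y $ i)\<rfloor> = \<lfloor>2^(k+2) * (x $ i)\<rfloor>" using assms unfolding cell_def by auto
    then have "\<bar>2^(k+2) * (y $ i) - 2^(k+2) * (x $ i)\<bar> < 1" by (rule floor_eq_close)
    then have "(2::real)^(k+2) * \<bar>y $ i - x $ i\<bar> < 1" by (simp add: abs_mult right_diff_distrib[symmetric])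
    then show ?thesis by (simp add: field_simps)
  qed
  then have "norm (y - x) \<le> sqrt (real CARD('d)) * (1 / 2^(k+2))" by (rule norm_vec_bound)
  then show ?thesis by (simp add: dist_norm)
qed

lemma key_finite:
  fixes U :: "(real^'d) set"
  assumes "bounded U"
  shows "finite (key k ` U)"
proof -
  from assms obtain R where R0: "\<forall>x\<in>U. norm x \<le> R" unfolding bounded_iff by auto
  define w :: real where "w = 2^(k+2) * R"
  define B :: int where "B = \<lceil>w\<rceil> + 1"
  have sub: "key k ` U \<subseteq> Pi UNIV (\<lambda>_. {-B..B})"
  proof
    fix c assume "c \<in> key k ` U"
    then obtain x where x: "x \<in> U" "c = key k x" by auto
    have "c i \<in> {-B..B}" for i
    proof -
      have nx: "norm x \<le> R" using R0 x(1) by simp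
      have "\<bar>x $ i\<bar> \<le> norm x" by (rule component_le_norm_cart)
      then have xi: "\<bar>x $ i\<bar> \<le> R" using nx by (rule order_trans)
      define t where "t = 2^(k+2) * (x $ i)"
      have "\<bar>t\<bar> = 2^(k+2) * \<bar>x $ i\<bar>" unfolding t_def by (simp add: abs_mult)
      also have "\<dots> \<le> w" unfolding w_def using xi by (intro mult_left_mono) auto
      finally have tw: "\<bar>t\<bar> \<le> w" .
      have t1: "t \<le> w" using tw by (rule order_trans[OF abs_ge_self])
      have t2: "- t \<le> w" using tw by (rule order_trans[OF abs_ge_minus_self])
      have ci: "c i = \<lfloor>t\<rfloor>" using x by (simp add: key_def t_def)
      have "\<lfloor>t\<rfloor> \<le> \<lfloor>w\<rfloor>" using t1 by (rule floor_mono)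
      moreover have "\<lfloor>w\<rfloor> \<le> \<lceil>w\<rceil>" by (rule floor_le_ceiling)
      ultimately have u: "\<lfloor>t\<rfloor> \<le> B" unfolding B_def by linarith
      have "\<lceil>- t\<rceil> \<le> \<lceil>w\<rceil>" using t2 by (rule ceiling_mono)
      then have l: "- B \<le> \<lfloor>t\<rfloor>" unfolding B_def ceiling_minus by simp
      show ?thesis using u l ci by simp
    qed
    then show "c \<in> Pi UNIV (\<lambda>_. {-B..B})" by (simp add: Pi_iff)
  qed
  have "finite (PiE (UNIV::'d set) (\<lambda>_. {-B..B}))" by (rule finite_PiE) auto
  then have "finite (Pi (UNIV::'d set) (\<lambda>_. {-B..B}))" by (simp add: PiE_UNIV_domain)
  then show ?thesis using sub by (rule finite_subset[rotated])
qed

definition clamp where "clamp a t = max (-a) (min a (t::real))"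

lemma sgn_min_clamp: "0 \<le> a \<Longrightarrow> sgn t * min \<bar>t\<bar> a = clamp a (t::real)"
  unfolding clamp_def by (auto simp: sgn_if min_def max_def)

lemma clip_clamp: "0 \<le> L \<Longrightarrow> clip L k t = clamp (L / 2^k) t"
  unfolding clip_def by (rule sgn_min_clamp) simp

lemma clamp_lip: "0 \<le> a \<Longrightarrow> \<bar>clamp a u - clamp a v\<bar> \<le> \<bar>u - v\<bar>"
  unfolding clamp_def by (auto simp: min_def max_def)

lemma clamp_bound: "0 \<le> a \<Longrightarrow> \<bar>clamp a u\<bar> \<le> a"
  unfolding clamp_def by (auto simp: min_def max_def)

lemma clamp_id: "\<bar>u\<bar> \<le> a \<Longrightarrow> clamp a u = u"
  unfolding clamp_def by (auto simp: min_def max_def)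

lemma fst_borel: "fst \<in> borel_measurable (borel :: ('x::topological_space \<times> 'y::topological_space) measure)"
  by (rule borel_measurable_continuous_onI) (intro continuous_on_fst continuous_on_id)

lemma snd_borel: "snd \<in> borel_measurable (borel :: ('x::topological_space \<times> 'y::topological_space) measure)"
  by (rule borel_measurable_continuous_onI) (intro continuous_on_snd continuous_on_id)

locale setting =
  fixes M :: "'a measure" and X :: "nat \<Rightarrow> 'a \<Rightarrow> real^'d" and Y :: "nat \<Rightarrow> 'a \<Rightarrow> real"
    and m :: "real^'d \<Rightarrow> real" and C L :: real
  assumes M: "prob_space M"
    and st: "stationary_process M (\<lambda>i \<omega>. (X i \<omega>, Y i \<omega>))"
    and er: "ergodic_process M (\<lambda>i \<omega>. (X i \<omega>, Y i \<omega>))"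
    and intY: "integrable M (Y 0)"
    and ce: "AE \<omega> in M. real_cond_exp M (vimage_algebra (space M) (X 0) borel) (Y 0) \<omega> = m (X 0 \<omega>)"
    and lip: "C-lipschitz_on UNIV m"
    and Lge: "L \<ge> C * sqrt (real CARD('d))"
begin

sublocale prob_space M by (rule M)

lemma Zm: "(\<lambda>\<omega>. (X i \<omega>, Y i \<omega>)) \<in> borel_measurable M"
  using st unfolding stationary_process_def by auto

lemma Xm[measurable]: "X i \<in> borel_measurable M"
  using measurable_compose[OF Zm fst_borel] by simp

lemma Ym[measurable]: "Y i \<in> borel_measurable M"
  using measurable_compose[OF Zm snd_borel] by simp

lemma C0: "0 \<le> C" using lip by (rule lipschitz_on_nonneg)

definition Cs where "Cs = C * sqrt (real CARD('d))"

lemma Cs0: "0 \<le> Cs" unfolding Cs_def using C0 by simp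

lemma L0: "0 \<le> L" using Lge Cs0 unfolding Cs_def by linarith

lemma m_borel[measurable]: "m \<in> borel_measurable borel"
  by (rule borel_measurable_continuous_onI) (rule lipschitz_on_continuous_on[OF lip])

definition muA where "muA k x = measure M {\<omega>\<in>space M. X 0 \<omega> \<in> cell k x}"

lemma sfsub: "sigma_finite_subalgebra M (vimage_algebra (space M) (X 0) borel)"
proof (rule finite_measure_subalgebra_is_sigma_finite)
  show "finite_measure_subalgebra M (vimage_algebra (space M) (X 0) borel)"
  proof (unfold_locales)
    have "sets (vimage_algebra (space M) (X 0) borel) \<subseteq> sets M"
    proof
      fix A assume "A \<in> sets (vimage_algebra (space M) (X 0) borel)"
      then obtain B where "B \<in> sets borel" "A = X 0 -` B \<inter> space M"
        by (auto simp: sets_vimage_algebra2)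
      then show "A \<in> sets M" by (simp add: measurable_sets[OF Xm])
    qed
    then show "subalgebra M (vimage_algebra (space M) (X 0) borel)"
      unfolding subalgebra_def by simp
  qed
qed

lemma ind_F_meas: "(\<lambda>\<omega>. indicator (cell k x) (X 0 \<omega>) :: real) \<in> borel_measurable (vimage_algebra (space M) (X 0) borel)"
proof -
  have "X 0 \<in> measurable (vimage_algebra (space M) (X 0) borel) borel"
    by (rule measurable_vimage_algebra1) simp
  then show ?thesis by measurable
qed

lemma int_indY: "integrable M (\<lambda>\<omega>. indicator (cell k x) (X 0 \<omega>) * Y 0 \<omega>)"
proof (rule Bochner_Integration.integrable_bound[OF intY])
  show "(\<lambda>\<omega>. indicator (cell k x) (X 0 \<omega>) * Y 0 \<omega>) \<in> borel_measurable M" by measurable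
  show "AE \<omega> in M. norm (indicator (cell k x) (X 0 \<omega>) * Y 0 \<omega>) \<le> norm (Y 0 \<omega>)"
    by (intro AE_I2) (simp add: indicator_def)
qed

lemma cm_formula:
  "cell_mean M (X 0) (Y 0) k x = (\<integral>\<omega>. indicator (cell k x) (X 0 \<omega>) * m (X 0 \<omega>) \<partial>M) / muA k x"
proof -
  interpret sf: sigma_finite_subalgebra M "vimage_algebra (space M) (X 0) borel" by (rule sfsub)
  have e1: "(\<integral>\<omega>. indicator (cell k x) (X 0 \<omega>) * real_cond_exp M (vimage_algebra (space M) (X 0) borel) (Y 0) \<omega> \<partial>M)
      = (\<integral>\<omega>. indicator (cell k x) (X 0 \<omega>) * Y 0 \<omega> \<partial>M)"
    by (rule sf.real_cond_exp_intg(2)[OF int_indY ind_F_meas Ym])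
  have e2: "(\<integral>\<omega>. indicator (cell k x) (X 0 \<omega>) * real_cond_exp M (vimage_algebra (space M) (X 0) borel) (Y 0) \<omega> \<partial>M)
      = (\<integral>\<omega>. indicator (cell k x) (X 0 \<omega>) * m (X 0 \<omega>) \<partial>M)"
  proof (rule integral_cong_AE)
    show "(\<lambda>\<omega>. indicator (cell k x) (X 0 \<omega>) * real_cond_exp M (vimage_algebra (space M) (X 0) borel) (Y 0) \<omega>) \<in> borel_measurable M"
      using borel_measurable_cond_exp2[of M "vimage_algebra (space M) (X 0) borel" "Y 0"] by measurable
    show "(\<lambda>\<omega>. indicator (cell k x) (X 0 \<omega>) * m (X 0 \<omega>)) \<in> borel_measurable M" by measurable
    show "AE \<omega> in M. indicator (cell k x) (X 0 \<omega>) * real_cond_exp M (vimage_algebra (space M) (X 0) borel) (Y 0) \<omega>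
        = indicator (cell k x) (X 0 \<omega>) * m (X 0 \<omega>)"
      using ce by (rule AE_mp) (intro AE_I2 impI, simp)
  qed
  show ?thesis unfolding cell_mean_def muA_def using e1 e2 by simp
qed

lemma muA_integral: "(\<integral>\<omega>. indicator (cell k x) (X 0 \<omega>) \<partial>M) = muA k x"
proof -
  have "(\<integral>\<omega>. indicator (cell k x) (X 0 \<omega>) \<partial>M) = (\<integral>\<omega>. indicator {\<omega>\<in>space M. X 0 \<omega> \<in> cell k x} \<omega> \<partial>M)"
    by (rule Bochner_Integration.integral_cong) (auto simp: indicator_def)
  also have "\<dots> = measure M ({\<omega>\<in>space M. X 0 \<omega> \<in> cell k x} \<inter> space M)" by (rule Bochner_Integration.integral_indicator)
  also have "\<dots> = muA k x" unfolding muA_def by (simp add: Int_absorb2)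
  finally show ?thesis .
qed

lemma cm_close:
  assumes pos: "0 < muA k x"
  shows "\<bar>cell_mean M (X 0) (Y 0) k x - m x\<bar> \<le> Cs / 2^(k+2)"
proof -
  define \<delta> :: real where "\<delta> = sqrt (real CARD('d)) / 2^(k+2)"
  have Cd: "C * \<delta> = Cs / 2^(k+2)" unfolding \<delta>_def Cs_def by simp
  have Cd0: "0 \<le> C * \<delta>" unfolding \<delta>_def using C0 by simp
  define ind where "ind = (\<lambda>\<omega>. indicator (cell k x) (X 0 \<omega>) :: real)"
  have ptw: "\<bar>ind \<omega> * (m (X 0 \<omega>) - m x)\<bar> \<le> ind \<omega> * (C * \<delta>)" for \<omega>
  proof (cases "X 0 \<omega> \<in> cell k x")
    case True
    have "\<bar>m (X 0 \<omega>) - m x\<bar> \<le> C * dist (X 0 \<omega>) x"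
      using lipschitz_onD[OF lip, of "X 0 \<omega>" x] by (simp add: dist_real_def)
    also have "\<dots> \<le> C * \<delta>" unfolding \<delta>_def using cell_dist[OF True] C0 by (rule mult_left_mono)
    finally show ?thesis using True by (simp add: ind_def)
  next
    case False then show ?thesis by (simp add: ind_def)
  qed
  have im: "ind \<in> borel_measurable M" unfolding ind_def by measurable
  have i1: "integrable M (\<lambda>\<omega>. ind \<omega> * (m (X 0 \<omega>) - m x))"
  proof (rule integrable_const_bound[where B="C * \<delta>"])
    show "AE \<omega> in M. norm (ind \<omega> * (m (X 0 \<omega>) - m x)) \<le> C * \<delta>"
    proof (intro AE_I2)
      fix \<omega>
      have "ind \<omega> * (C * \<delta>) \<le> C * \<delta>" using Cd0 by (simp add: ind_def indicator_def)
      then show "norm (ind \<omega> * (m (X 0 \<omega>) - m x)) \<le> C * \<delta>" using ptw[of \<omega>] by simp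
    qed
    show "(\<lambda>\<omega>. ind \<omega> * (m (X 0 \<omega>) - m x)) \<in> borel_measurable M" unfolding ind_def by measurable
  qed
  have iind: "integrable M ind"
    by (rule integrable_const_bound[where B=1]) (auto simp: ind_def indicator_def im)
  have i2: "integrable M (\<lambda>\<omega>. ind \<omega> * (C * \<delta>))" using iind by simp
  have i3: "integrable M (\<lambda>\<omega>. ind \<omega> * m (X 0 \<omega>))"
  proof -
    have "integrable M (\<lambda>\<omega>. ind \<omega> * (m (X 0 \<omega>) - m x) + ind \<omega> * m x)" using i1 iind by simp
    then show ?thesis by (simp add: algebra_simps)
  qed
  have mu: "(\<integral>\<omega>. ind \<omega> \<partial>M) = muA k x" unfolding ind_def by (rule muA_integral)
  have e1: "(\<integral>\<omega>. ind \<omega> * (m (X 0 \<omega>) - m x) \<partial>M) = (\<integral>\<omega>. ind \<omega> * m (X 0 \<omega>) \<partial>M) - m x * muA k x"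
  proof -
    have "(\<integral>\<omega>. ind \<omega> * (m (X 0 \<omega>) - m x) \<partial>M) = (\<integral>\<omega>. ind \<omega> * m (X 0 \<omega>) - ind \<omega> * m x \<partial>M)"
      by (simp add: algebra_simps)
    also have "\<dots> = (\<integral>\<omega>. ind \<omega> * m (X 0 \<omega>) \<partial>M) - (\<integral>\<omega>. ind \<omega> * m x \<partial>M)"
      using i3 iind by (intro Bochner_Integration.integral_diff) auto
    also have "(\<integral>\<omega>. ind \<omega> * m x \<partial>M) = m x * muA k x" using mu by simp
    finally show ?thesis .
  qed
  have e2: "\<bar>\<integral>\<omega>. ind \<omega> * (m (X 0 \<omega>) - m x) \<partial>M\<bar> \<le> (\<integral>\<omega>. ind \<omega> * (C * \<delta>) \<partial>M)"
  proof -
    have "norm (\<integral>\<omega>. ind \<omega> * (m (X 0 \<omega>) - m x) \<partial>M) \<le> (\<integral>\<omega>. ind \<omega> * (C * \<delta>) \<partial>M)"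
    proof -
      have "norm (\<integral>\<omega>. ind \<omega> * (m (X 0 \<omega>) - m x) \<partial>M) \<le> (\<integral>\<omega>. norm (ind \<omega> * (m (X 0 \<omega>) - m x)) \<partial>M)"
        by (rule integral_norm_bound)
      also have "\<dots> \<le> (\<integral>\<omega>. ind \<omega> * (C * \<delta>) \<partial>M)"
      proof (rule integral_mono)
        show "integrable M (\<lambda>\<omega>. norm (ind \<omega> * (m (X 0 \<omega>) - m x)))" using i1 by (rule integrable_norm)
        show "integrable M (\<lambda>\<omega>. ind \<omega> * (C * \<delta>))" by (rule i2)
        fix \<omega> show "norm (ind \<omega> * (m (X 0 \<omega>) - m x)) \<le> ind \<omega> * (C * \<delta>)" using ptw[of \<omega>] by simp
      qed
      finally show ?thesis .
    qed
    then show ?thesis by simp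
  qed
  have e3: "(\<integral>\<omega>. ind \<omega> * (C * \<delta>) \<partial>M) = C * \<delta> * muA k x" using mu by simp
  have b: "\<bar>(\<integral>\<omega>. ind \<omega> * m (X 0 \<omega>) \<partial>M) - m x * muA k x\<bar> \<le> C * \<delta> * muA k x"
    using e2 unfolding e1 e3 .
  have "cell_mean M (X 0) (Y 0) k x - m x = ((\<integral>\<omega>. ind \<omega> * m (X 0 \<omega>) \<partial>M) - m x * muA k x) / muA k x"
    unfolding cm_formula ind_def using pos by (simp add: field_simps)
  then have "\<bar>cell_mean M (X 0) (Y 0) k x - m x\<bar> = \<bar>(\<integral>\<omega>. ind \<omega> * m (X 0 \<omega>) \<partial>M) - m x * muA k x\<bar> / muA k x"
    using pos by simp
  also have "\<dots> \<le> C * \<delta> * muA k x / muA k x" using b pos by (intro divide_right_mono) auto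
  also have "\<dots> = C * \<delta>" using pos by simp
  finally show ?thesis unfolding Cd .
qed

end

context setting
begin

lemma pos_muA: "x \<in> pos_set M (X 0) \<Longrightarrow> 1 \<le> k \<Longrightarrow> 0 < muA k x"
  unfolding pos_set_def muA_def by auto

lemma mL_eq:
  assumes x: "x \<in> pos_set M (X 0)"
  shows "m_L M (X 0) (Y 0) L x = m x"
proof -
  define a where "a k = cell_mean M (X 0) (Y 0) (k+1) x" for k
  have ab: "\<bar>a k - m x\<bar> \<le> Cs / 2^(k+3)" for k
  proof -
    have h: "\<bar>cell_mean M (X 0) (Y 0) (k+1) x - m x\<bar> \<le> Cs / 2^(k+1+2)"
      by (rule cm_close[OF pos_muA[OF x]]) simp
    have eq: "k + 1 + 2 = k + 3" by simp
    show ?thesis unfolding a_def using h unfolding eq .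
  qed
  have lim: "a \<longlonglongrightarrow> m x"
  proof -
    have "(\<lambda>k. a k - m x) \<longlonglongrightarrow> 0"
    proof (rule Lim_null_comparison)
      show "eventually (\<lambda>k. norm (a k - m x) \<le> Cs / 8 * (1/2)^k) sequentially"
      proof (intro always_eventually allI)
        fix k
        have e: "Cs / 2^(k+3) = Cs / 8 * (1/2)^k" by (simp add: power_add field_simps)
        show "norm (a k - m x) \<le> Cs / 8 * (1/2)^k" using ab[of k] unfolding e[symmetric] real_norm_def .
      qed
      show "(\<lambda>k. Cs / 8 * (1/2::real)^k) \<longlonglongrightarrow> 0"
        by (intro tendsto_mult_right_zero LIMSEQ_realpow_zero) auto
    qed
    then show ?thesis by (simp add: LIM_zero_iff)
  qed
  have tm: "clip L (k+2) (cell_mean M (X 0) (Y 0) (k+2) x - cell_mean M (X 0) (Y 0) (k+1) x) = a (Suc k) - a k" for k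
  proof -
    have e: "cell_mean M (X 0) (Y 0) (k+2) x - cell_mean M (X 0) (Y 0) (k+1) x = a (Suc k) - a k"
      unfolding a_def by simp
    have p: "(0::real) < 2^(k+2)" by simp
    have "\<bar>a (Suc k) - a k\<bar> \<le> \<bar>a (Suc k) - m x\<bar> + \<bar>a k - m x\<bar>" by linarith
    also have "\<dots> \<le> Cs / 2^(k+4) + Cs / 2^(k+3)"
    proof -
      have eq4: "Suc k + 3 = k + 4" by simp
      have h1: "\<bar>a (Suc k) - m x\<bar> \<le> Cs / 2^(k+4)" using ab[of "Suc k"] unfolding eq4 .
      show ?thesis using h1 ab[of k] by (rule add_mono)
    qed
    also have "\<dots> = (3/4) * (Cs / 2^(k+2))" by (simp add: power_add field_simps)
    also have "\<dots> \<le> Cs / 2^(k+2)" by (rule mult_left_le_one_le) (simp_all add: Cs0)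
    also have "\<dots> \<le> L / 2^(k+2)" using Lge unfolding Cs_def by (intro divide_right_mono) auto
    finally have "\<bar>a (Suc k) - a k\<bar> \<le> L / 2^(k+2)" .
    then show ?thesis unfolding e clip_clamp[OF L0] by (rule clamp_id)
  qed
  have "(\<lambda>k. a (Suc k) - a k) sums (m x - a 0)" by (rule telescope_sums[OF lim])
  then have "(\<Sum>k. clip L (k+2) (cell_mean M (X 0) (Y 0) (k+2) x - cell_mean M (X 0) (Y 0) (k+1) x)) = m x - a 0"
    unfolding tm by (rule sums_unique[symmetric])
  then show ?thesis unfolding m_L_def a_def by simp
qed

lemma emp_conv:
  assumes pos: "0 < muA k x"
  shows "AE \<omega> in M. (\<lambda>n. emp_mean X Y k n \<omega> x) \<longlonglongrightarrow> cell_mean M (X 0) (Y 0) k x"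
proof -
  have [measurable]: "fst \<in> borel_measurable (borel :: ((real^'d) \<times> real) measure)" by (rule fst_borel)
  have [measurable]: "snd \<in> borel_measurable (borel :: ((real^'d) \<times> real) measure)" by (rule snd_borel)
  define h1 where "h1 = (\<lambda>p::(real^'d) \<times> real. indicator (cell k x) (fst p) :: real)"
  define h2 where "h2 = (\<lambda>p::(real^'d) \<times> real. snd p * indicator (cell k x) (fst p) :: real)"
  have h1m: "h1 \<in> borel_measurable borel" unfolding h1_def by measurable
  have h2m: "h2 \<in> borel_measurable borel" unfolding h2_def by measurable
  have h1i: "integrable M (\<lambda>\<omega>. h1 (X 0 \<omega>, Y 0 \<omega>))"
    by (rule integrable_const_bound[where B=1]) (auto simp: h1_def indicator_def)
  have h2i: "integrable M (\<lambda>\<omega>. h2 (X 0 \<omega>, Y 0 \<omega>))"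
    using int_indY[of k x] by (simp add: h2_def mult.commute)
  have a1: "AE \<omega> in M. (\<lambda>n. (\<Sum>j<n. h1 (X j \<omega>, Y j \<omega>)) / real n) \<longlonglongrightarrow> (\<integral>\<omega>. h1 (X 0 \<omega>, Y 0 \<omega>) \<partial>M)"
    using ergodic_avg[OF M st er h1m] h1i by simp
  have a2: "AE \<omega> in M. (\<lambda>n. (\<Sum>j<n. h2 (X j \<omega>, Y j \<omega>)) / real n) \<longlonglongrightarrow> (\<integral>\<omega>. h2 (X 0 \<omega>, Y 0 \<omega>) \<partial>M)"
    using ergodic_avg[OF M st er h2m] h2i by simp
  have i1: "(\<integral>\<omega>. h1 (X 0 \<omega>, Y 0 \<omega>) \<partial>M) = muA k x" unfolding h1_def using muA_integral by simp
  have i2: "(\<integral>\<omega>. h2 (X 0 \<omega>, Y 0 \<omega>) \<partial>M) = (\<integral>\<omega>. indicator (cell k x) (X 0 \<omega>) * Y 0 \<omega> \<partial>M)"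
    unfolding h2_def by (simp add: mult.commute)
  have cm: "cell_mean M (X 0) (Y 0) k x = (\<integral>\<omega>. indicator (cell k x) (X 0 \<omega>) * Y 0 \<omega> \<partial>M) / muA k x"
    unfolding cell_mean_def muA_def by simp
  show ?thesis using a1 a2
  proof eventually_elim
    case (elim \<omega>)
    have "(\<lambda>n. ((\<Sum>j<n. h2 (X j \<omega>, Y j \<omega>)) / real n) / ((\<Sum>j<n. h1 (X j \<omega>, Y j \<omega>)) / real n))
        \<longlonglongrightarrow> (\<integral>\<omega>. h2 (X 0 \<omega>, Y 0 \<omega>) \<partial>M) / (\<integral>\<omega>. h1 (X 0 \<omega>, Y 0 \<omega>) \<partial>M)"
      using elim pos i1 by (intro tendsto_divide) auto
    then have lim: "(\<lambda>n. ((\<Sum>j<n. h2 (X j \<omega>, Y j \<omega>)) / real n) / ((\<Sum>j<n. h1 (X j \<omega>, Y j \<omega>)) / real n))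
        \<longlonglongrightarrow> cell_mean M (X 0) (Y 0) k x"
      unfolding i1 i2 cm .
    have ev: "eventually (\<lambda>n. ((\<Sum>j<n. h2 (X j \<omega>, Y j \<omega>)) / real n) / ((\<Sum>j<n. h1 (X j \<omega>, Y j \<omega>)) / real n)
        = emp_mean X Y k n \<omega> x) sequentially"
    proof (rule eventually_mono[OF eventually_gt_at_top[of 0]])
      fix n :: nat assume n: "0 < n"
      show "((\<Sum>j<n. h2 (X j \<omega>, Y j \<omega>)) / real n) / ((\<Sum>j<n. h1 (X j \<omega>, Y j \<omega>)) / real n)
        = emp_mean X Y k n \<omega> x"
        unfolding emp_mean_def h1_def h2_def using n by simp
    qed
    show ?case using tendsto_cong[OF ev] lim by simp
  qed
qed

lemma emp_mean_cell: "cell k x = cell k x' \<Longrightarrow> emp_mean X Y k n \<omega> x = emp_mean X Y k n \<omega> x'"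
  unfolding emp_mean_def by simp

lemma cell_mean_cell: "cell k x = cell k x' \<Longrightarrow> cell_mean M (X 0) (Y 0) k x = cell_mean M (X 0) (Y 0) k x'"
  unfolding cell_mean_def by simp

lemma muA_cell: "cell k x = cell k x' \<Longrightarrow> muA k x = muA k x'"
  unfolding muA_def by simp

lemma emp_conv_all:
  "AE \<omega> in M. \<forall>k x. 0 < muA k x \<longrightarrow> (\<lambda>n. emp_mean X Y k n \<omega> x) \<longlonglongrightarrow> cell_mean M (X 0) (Y 0) k x"
proof -
  have "\<forall>k (c::'d \<Rightarrow> int). AE \<omega> in M. \<forall>x. key k x = c \<longrightarrow> 0 < muA k x \<longrightarrow>
      (\<lambda>n. emp_mean X Y k n \<omega> x) \<longlonglongrightarrow> cell_mean M (X 0) (Y 0) k x"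
  proof (intro allI)
    fix k and c :: "'d \<Rightarrow> int"
    show "AE \<omega> in M. \<forall>x. key k x = c \<longrightarrow> 0 < muA k x \<longrightarrow>
      (\<lambda>n. emp_mean X Y k n \<omega> x) \<longlonglongrightarrow> cell_mean M (X 0) (Y 0) k x"
    proof (cases "\<exists>x0. key k x0 = c \<and> 0 < muA k x0")
      case True
      then obtain x0 where x0: "key k x0 = c" "0 < muA k x0" by metis
      from emp_conv[OF x0(2)] show ?thesis
      proof (rule AE_mp, intro AE_I2 impI allI)
        fix \<omega> x
        assume "\<omega> \<in> space M" and c0: "(\<lambda>n. emp_mean X Y k n \<omega> x0) \<longlonglongrightarrow> cell_mean M (X 0) (Y 0) k x0"
          and kx: "key k x = c" and "0 < muA k x"
        have ce: "cell k x = cell k x0" using x0(1) kx by (intro cell_eqI) simp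
        show "(\<lambda>n. emp_mean X Y k n \<omega> x) \<longlonglongrightarrow> cell_mean M (X 0) (Y 0) k x"
          using c0 unfolding emp_mean_cell[OF ce] cell_mean_cell[OF ce] .
      qed
    next
      case False
      then show ?thesis by (intro AE_I2) auto
    qed
  qed
  then have "AE \<omega> in M. \<forall>k (c::'d \<Rightarrow> int). \<forall>x. key k x = c \<longrightarrow> 0 < muA k x \<longrightarrow>
      (\<lambda>n. emp_mean X Y k n \<omega> x) \<longlonglongrightarrow> cell_mean M (X 0) (Y 0) k x"
    unfolding AE_all_countable .
  then show ?thesis by (rule AE_mp) (intro AE_I2 impI, auto)
qed

end

lemma unif_tannery:
  fixes F :: "nat \<Rightarrow> 'x \<Rightarrow> nat \<Rightarrow> real" and G :: "'x \<Rightarrow> nat \<Rightarrow> real" and b :: "nat \<Rightarrow> real"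
  assumes conv: "\<And>k. uniform_limit U (\<lambda>n x. F n x k) (\<lambda>x. G x k) sequentially"
    and bF: "\<And>n x k. x \<in> U \<Longrightarrow> \<bar>F n x k\<bar> \<le> b k" and bG: "\<And>x k. x \<in> U \<Longrightarrow> \<bar>G x k\<bar> \<le> b k"
    and sb: "summable b"
  shows "uniform_limit U (\<lambda>n x. suminf (F n x)) (\<lambda>x. suminf (G x)) sequentially"
  unfolding uniform_limit_iff
proof (intro allI impI)
  fix e :: real assume e: "0 < e"
  define q where "q = e / 4"
  have q: "0 < q" "e = 4 * q" using e by (simp_all add: q_def)
  obtain K where K: "norm (\<Sum>i. b (i + K)) < q" using suminf_exist_split[OF q(1) sb] by auto
  define d where "d = q / (real K + 1)"
  have d: "0 < d" using q by (simp add: d_def)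
  have Kd: "real K * d \<le> q"
  proof -
    have "real K * d = q * (real K / (real K + 1))" by (simp add: d_def)
    also have "\<dots> \<le> q * 1" using q by (intro mult_left_mono) auto
    finally show ?thesis by simp
  qed
  have ev: "eventually (\<lambda>n. \<forall>k\<in>{..<K}. \<forall>x\<in>U. dist (F n x k) (G x k) < d) sequentially"
  proof (rule eventually_ball_finite)
    show "\<forall>k\<in>{..<K}. eventually (\<lambda>n. \<forall>x\<in>U. dist (F n x k) (G x k) < d) sequentially"
      using conv d unfolding uniform_limit_iff by blast
  qed simp
  show "eventually (\<lambda>n. \<forall>x\<in>U. dist (suminf (F n x)) (suminf (G x)) < e) sequentially"
  proof (rule eventually_mono[OF ev], intro ballI)
    fix n x assume h: "\<forall>k\<in>{..<K}. \<forall>x\<in>U. dist (F n x k) (G x k) < d" and x: "x \<in> U"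
    have sbK: "summable (\<lambda>i. b (i + K))" using sb by (rule summable_ignore_initial_segment)
    have sF: "summable (F n x)" using sb by (rule summable_comparison_test'[where N=0]) (simp add: bF[OF x])
    have sG: "summable (G x)" using sb by (rule summable_comparison_test'[where N=0]) (simp add: bG[OF x])
    have tF: "\<bar>\<Sum>i. F n x (i + K)\<bar> \<le> (\<Sum>i. b (i + K))"
      using norm_suminf_le[of "\<lambda>i. F n x (i + K)" "\<lambda>i. b (i + K)"] bF[OF x] sbK by simp
    have tG: "\<bar>\<Sum>i. G x (i + K)\<bar> \<le> (\<Sum>i. b (i + K))"
      using norm_suminf_le[of "\<lambda>i. G x (i + K)" "\<lambda>i. b (i + K)"] bG[OF x] sbK by simp
    have tb: "(\<Sum>i. b (i + K)) < q" using K by simp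
    have fin: "\<bar>(\<Sum>k<K. F n x k) - (\<Sum>k<K. G x k)\<bar> \<le> real K * d"
    proof -
      have "\<bar>(\<Sum>k<K. F n x k) - (\<Sum>k<K. G x k)\<bar> = \<bar>\<Sum>k<K. F n x k - G x k\<bar>"
        by (simp add: sum_subtractf)
      also have "\<dots> \<le> (\<Sum>k<K. \<bar>F n x k - G x k\<bar>)" by (rule sum_abs)
      also have "\<dots> \<le> of_nat (card {..<K}) * d"
      proof (rule sum_bounded_above)
        fix k assume "k \<in> {..<K}"
        then have "dist (F n x k) (G x k) < d" using h x by blast
        then show "\<bar>F n x k - G x k\<bar> \<le> d" by (simp add: dist_real_def)
      qed
      finally show ?thesis by simp
    qed
    have "suminf (F n x) - suminf (G x) = ((\<Sum>i. F n x (i + K)) - (\<Sum>i. G x (i + K)))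
        + ((\<Sum>k<K. F n x k) - (\<Sum>k<K. G x k))"
      using suminf_split_initial_segment[OF sF, of K] suminf_split_initial_segment[OF sG, of K] by simp
    then have "\<bar>suminf (F n x) - suminf (G x)\<bar> \<le> \<bar>\<Sum>i. F n x (i + K)\<bar> + \<bar>\<Sum>i. G x (i + K)\<bar>
        + \<bar>(\<Sum>k<K. F n x k) - (\<Sum>k<K. G x k)\<bar>" by linarith
    then have "\<bar>suminf (F n x) - suminf (G x)\<bar> < 4 * q" using tF tG tb fin Kd by linarith
    then show "dist (suminf (F n x)) (suminf (G x)) < e" using q by (simp add: dist_real_def)
  qed
qed

lemma uniform_limit_single_iff:
  "uniform_limit {x} f g sequentially \<longleftrightarrow> (\<lambda>n. f n x) \<longlonglongrightarrow> (g x :: real)"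
  unfolding uniform_limit_iff tendsto_iff by simp

lemma sum_shift2:
  fixes g :: "nat \<Rightarrow> 'b::comm_monoid_add" and j :: nat
  shows "(\<Sum>k\<in>{2..j+1}. g k) = (\<Sum>k<j. g (k+2))"
proof (induction j)
  case 0 then show ?case by simp
next
  case (Suc j)
  have "(\<Sum>k\<in>{2..Suc j + 1}. g k) = (\<Sum>k\<in>{2..j+1}. g k) + g (j + 2)"
    by (simp add: sum.cl_ivl_Suc)
  also have "\<dots> = (\<Sum>k<j. g (k+2)) + g (j + 2)" using Suc by simp
  also have "\<dots> = (\<Sum>k<Suc j. g (k+2))" by simp
  finally show ?case .
qed

context setting
begin

definition Fterm where
  "Fterm N \<omega> n x k = (if k + 2 \<le> N n then clip L (k+2) (emp_mean X Y (k+2) n \<omega> x - emp_mean X Y (k+1) n \<omega> x) else 0)"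

definition Gterm where
  "Gterm x k = clip L (k+2) (cell_mean M (X 0) (Y 0) (k+2) x - cell_mean M (X 0) (Y 0) (k+1) x)"

lemma clip_bound: "\<bar>clip L k t\<bar> \<le> L / 2^k"
  unfolding clip_clamp[OF L0] by (rule clamp_bound) (simp add: L0)

lemma clip_lip: "\<bar>clip L k u - clip L k v\<bar> \<le> \<bar>u - v\<bar>"
  unfolding clip_clamp[OF L0] by (rule clamp_lip) (simp add: L0)

lemma Fterm_bound: "\<bar>Fterm N \<omega> n x k\<bar> \<le> L / 2^(k+2)"
proof (cases "k + 2 \<le> N n")
  case True
  then have "Fterm N \<omega> n x k = clip L (k+2) (emp_mean X Y (k+2) n \<omega> x - emp_mean X Y (k+1) n \<omega> x)"
    unfolding Fterm_def by (simp only: if_P)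
  then show ?thesis by (simp only:) (rule clip_bound)
next
  case False then show ?thesis unfolding Fterm_def using L0 by simp
qed

lemma Gterm_bound: "\<bar>Gterm x k\<bar> \<le> L / 2^(k+2)"
  unfolding Gterm_def by (rule clip_bound)

lemma summable_b: "summable (\<lambda>k. L / 2^(k+2))"
proof -
  have eq: "(\<lambda>k. L / 4 * (1/2::real)^k) = (\<lambda>k. L / 2^(k+2))" by (rule ext) (simp add: power_add field_simps)
  show ?thesis unfolding eq[symmetric] by (intro summable_mult summable_geometric) simp
qed

lemma m_hat_split:
  assumes N1: "1 \<le> N n"
  shows "m_hat X Y L (N n) n \<omega> x = emp_mean X Y 1 n \<omega> x + suminf (Fterm N \<omega> n x)"
proof -
  define g where "g k = clip L k (emp_mean X Y k n \<omega> x - emp_mean X Y (k - 1) n \<omega> x)" for k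
  define j where "j = N n - 1"
  have Nj: "N n = j + 1" using N1 unfolding j_def by simp
  have s1: "(\<Sum>k\<in>{2..N n}. g k) = (\<Sum>k<j. g (k+2))" unfolding Nj by (rule sum_shift2)
  have "Fterm N \<omega> n x sums (\<Sum>k<j. Fterm N \<omega> n x k)"
    by (rule sums_finite) (auto simp: Fterm_def Nj)
  moreover have "(\<Sum>k<j. Fterm N \<omega> n x k) = (\<Sum>k<j. g (k+2))"
    by (rule sum.cong) (auto simp: Fterm_def g_def Nj)
  ultimately have "suminf (Fterm N \<omega> n x) = (\<Sum>k\<in>{2..N n}. g k)" unfolding s1 by (simp add: sums_iff)
  then show ?thesis unfolding m_hat_def g_def by simp
qed

lemma m_L_split: "m_L M (X 0) (Y 0) L x = cell_mean M (X 0) (Y 0) 1 x + suminf (Gterm x)"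
  unfolding m_L_def Gterm_def by simp

lemma main_uniform:
  fixes N :: "nat \<Rightarrow> nat"
  assumes N1: "\<forall>n. N n \<ge> 1" and Nlim: "filterlim N at_top sequentially"
    and US: "U \<subseteq> pos_set M (X 0)"
    and uE: "\<And>j. 1 \<le> j \<Longrightarrow> uniform_limit U (\<lambda>n x. emp_mean X Y j n \<omega> x) (\<lambda>x. cell_mean M (X 0) (Y 0) j x) sequentially"
  shows "uniform_limit U (\<lambda>n x. m_hat X Y L (N n) n \<omega> x) m sequentially"
proof -
  have convF: "uniform_limit U (\<lambda>n x. Fterm N \<omega> n x k) (\<lambda>x. Gterm x k) sequentially" for k
    unfolding uniform_limit_iff
  proof (intro allI impI)
    fix e :: real assume e: "0 < e"
    define q where "q = e / 2"
    have q: "0 < q" "e = 2 * q" using e by (simp_all add: q_def)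
    have e1: "eventually (\<lambda>n. \<forall>x\<in>U. dist (emp_mean X Y (k+2) n \<omega> x) (cell_mean M (X 0) (Y 0) (k+2) x) < q) sequentially"
      using uE[of "k+2"] q(1) unfolding uniform_limit_iff by simp
    have e2: "eventually (\<lambda>n. \<forall>x\<in>U. dist (emp_mean X Y (k+1) n \<omega> x) (cell_mean M (X 0) (Y 0) (k+1) x) < q) sequentially"
      using uE[of "k+1"] q(1) unfolding uniform_limit_iff by simp
    have e3: "eventually (\<lambda>n. k + 2 \<le> N n) sequentially"
      using Nlim unfolding filterlim_at_top by simp
    show "eventually (\<lambda>n. \<forall>x\<in>U. dist (Fterm N \<omega> n x k) (Gterm x k) < e) sequentially"
      using e1 e2 e3
    proof eventually_elim
      case (elim n)
      show ?case
      proof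
        fix x assume x: "x \<in> U"
        have a1: "\<bar>emp_mean X Y (k+2) n \<omega> x - cell_mean M (X 0) (Y 0) (k+2) x\<bar> < q"
          using elim x by (simp add: dist_real_def)
        have a2: "\<bar>emp_mean X Y (k+1) n \<omega> x - cell_mean M (X 0) (Y 0) (k+1) x\<bar> < q"
          using elim x by (simp add: dist_real_def)
        have "\<bar>Fterm N \<omega> n x k - Gterm x k\<bar>
            \<le> \<bar>(emp_mean X Y (k+2) n \<omega> x - emp_mean X Y (k+1) n \<omega> x)
               - (cell_mean M (X 0) (Y 0) (k+2) x - cell_mean M (X 0) (Y 0) (k+1) x)\<bar>"
          unfolding Fterm_def Gterm_def using elim by (simp add: clip_lip)
        also have "\<dots> < 2 * q" using a1 a2 by linarith
        finally show "dist (Fterm N \<omega> n x k) (Gterm x k) < e" using q by (simp add: dist_real_def)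
      qed
    qed
  qed
  have "uniform_limit U (\<lambda>n x. suminf (Fterm N \<omega> n x)) (\<lambda>x. suminf (Gterm x)) sequentially"
    by (rule unif_tannery[OF convF Fterm_bound Gterm_bound summable_b])
  then have ul: "uniform_limit U (\<lambda>n x. emp_mean X Y 1 n \<omega> x + suminf (Fterm N \<omega> n x))
      (\<lambda>x. cell_mean M (X 0) (Y 0) 1 x + suminf (Gterm x)) sequentially"
    using uE[of 1] by (intro uniform_limit_add) auto
  show ?thesis
  proof (subst uniform_limit_cong')
    show "\<And>n x. x \<in> U \<Longrightarrow> m_hat X Y L (N n) n \<omega> x = emp_mean X Y 1 n \<omega> x + suminf (Fterm N \<omega> n x)"
      using N1 by (intro m_hat_split) auto
    show "\<And>x. x \<in> U \<Longrightarrow> m x = cell_mean M (X 0) (Y 0) 1 x + suminf (Gterm x)"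
      using US mL_eq m_L_split by auto
  qed (rule ul)
qed

end

context setting
begin

lemma part_a_omega:
  assumes N1: "\<forall>n. N n \<ge> 1" and Nlim: "filterlim N at_top sequentially"
    and conv: "\<forall>k x. 0 < muA k x \<longrightarrow> (\<lambda>n. emp_mean X Y k n \<omega> x) \<longlonglongrightarrow> cell_mean M (X 0) (Y 0) k x"
    and x: "x \<in> pos_set M (X 0)"
  shows "(\<lambda>n. m_hat X Y L (N n) n \<omega> x) \<longlonglongrightarrow> m x"
proof -
  have "uniform_limit {x} (\<lambda>n x. m_hat X Y L (N n) n \<omega> x) m sequentially"
  proof (rule main_uniform[OF N1 Nlim])
    show "{x} \<subseteq> pos_set M (X 0)" using x by simp
    fix j :: nat assume j: "1 \<le> j"
    show "uniform_limit {x} (\<lambda>n x. emp_mean X Y j n \<omega> x) (\<lambda>x. cell_mean M (X 0) (Y 0) j x) sequentially"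
      unfolding uniform_limit_single_iff using conv pos_muA[OF x j] by simp
  qed
  then show ?thesis unfolding uniform_limit_single_iff .
qed

lemma part_a:
  assumes N1: "\<forall>n. N n \<ge> 1" and Nlim: "filterlim N at_top sequentially"
  shows "AE \<omega> in M. \<forall>x \<in> pos_set M (X 0). (\<lambda>n. m_hat X Y L (N n) n \<omega> x) \<longlonglongrightarrow> m x"
  using emp_conv_all
proof (rule AE_mp, intro AE_I2 impI ballI)
  fix \<omega> x assume "\<forall>k x. 0 < muA k x \<longrightarrow> (\<lambda>n. emp_mean X Y k n \<omega> x) \<longlonglongrightarrow> cell_mean M (X 0) (Y 0) k x"
    and "x \<in> pos_set M (X 0)"
  then show "(\<lambda>n. m_hat X Y L (N n) n \<omega> x) \<longlonglongrightarrow> m x" by (intro part_a_omega[OF N1 Nlim])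
qed

lemma unif_cells:
  assumes bS: "bounded (pos_set M (X 0))" and j: "1 \<le> j"
    and conv: "\<forall>k x. 0 < muA k x \<longrightarrow> (\<lambda>n. emp_mean X Y k n \<omega> x) \<longlonglongrightarrow> cell_mean M (X 0) (Y 0) k x"
  shows "uniform_limit (pos_set M (X 0)) (\<lambda>n x. emp_mean X Y j n \<omega> x) (\<lambda>x. cell_mean M (X 0) (Y 0) j x) sequentially"
  unfolding uniform_limit_iff
proof (intro allI impI)
  fix e :: real assume e: "0 < e"
  let ?S = "pos_set M (X 0)"
  have fin: "finite (key j ` ?S)" using bS by (rule key_finite)
  have "eventually (\<lambda>n. \<forall>c\<in>key j ` ?S. \<forall>x\<in>?S. key j x = c \<longrightarrow>
      dist (emp_mean X Y j n \<omega> x) (cell_mean M (X 0) (Y 0) j x) < e) sequentially"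
  proof (rule eventually_ball_finite[OF fin], rule ballI)
    fix c assume "c \<in> key j ` ?S"
    then obtain x0 where x0: "x0 \<in> ?S" "c = key j x0" by auto
    have "(\<lambda>n. emp_mean X Y j n \<omega> x0) \<longlonglongrightarrow> cell_mean M (X 0) (Y 0) j x0"
      using conv pos_muA[OF x0(1) j] by simp
    then have ev: "eventually (\<lambda>n. dist (emp_mean X Y j n \<omega> x0) (cell_mean M (X 0) (Y 0) j x0) < e) sequentially"
      using e by (simp add: tendsto_iff)
    show "eventually (\<lambda>n. \<forall>x\<in>?S. key j x = c \<longrightarrow>
      dist (emp_mean X Y j n \<omega> x) (cell_mean M (X 0) (Y 0) j x) < e) sequentially"
    proof (rule eventually_mono[OF ev], intro ballI impI)
      fix n x assume h: "dist (emp_mean X Y j n \<omega> x0) (cell_mean M (X 0) (Y 0) j x0) < e"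
        and "x \<in> ?S" and kx: "key j x = c"
      have ce: "cell j x = cell j x0" using kx x0(2) by (intro cell_eqI) simp
      show "dist (emp_mean X Y j n \<omega> x) (cell_mean M (X 0) (Y 0) j x) < e"
        using h unfolding emp_mean_cell[OF ce] cell_mean_cell[OF ce] .
    qed
  qed
  then show "eventually (\<lambda>n. \<forall>x\<in>?S. dist (emp_mean X Y j n \<omega> x) (cell_mean M (X 0) (Y 0) j x) < e) sequentially"
    by (rule eventually_mono) auto
qed

lemma part_b:
  assumes N1: "\<forall>n. N n \<ge> 1" and Nlim: "filterlim N at_top sequentially"
    and bS: "bounded (pos_set M (X 0))"
  shows "AE \<omega> in M. uniform_limit (pos_set M (X 0)) (\<lambda>n x. m_hat X Y L (N n) n \<omega> x) m sequentially"
  using emp_conv_all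
proof (rule AE_mp, intro AE_I2 impI)
  fix \<omega> assume conv: "\<forall>k x. 0 < muA k x \<longrightarrow> (\<lambda>n. emp_mean X Y k n \<omega> x) \<longlonglongrightarrow> cell_mean M (X 0) (Y 0) k x"
  show "uniform_limit (pos_set M (X 0)) (\<lambda>n x. m_hat X Y L (N n) n \<omega> x) m sequentially"
    by (rule main_uniform[OF N1 Nlim order_refl unif_cells[OF bS _ conv]])
qed

abbreviation mu where "mu \<equiv> distr M borel (X 0)"

lemma mu_prob: "prob_space mu"
  by (rule prob_space_distr) simp

lemma emeasure_mu_cell: "emeasure mu (cell k x) = ennreal (muA k x)"
proof -
  have "emeasure mu (cell k x) = emeasure M (X 0 -` cell k x \<inter> space M)"
    by (rule emeasure_distr) simp_all
  also have "X 0 -` cell k x \<inter> space M = {\<omega>\<in>space M. X 0 \<omega> \<in> cell k x}" by auto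
  also have "emeasure M {\<omega>\<in>space M. X 0 \<omega> \<in> cell k x} = ennreal (muA k x)"
    unfolding muA_def by (rule emeasure_eq_measure)
  finally show ?thesis .
qed

lemma AE_mu_S: "AE x in mu. x \<in> pos_set M (X 0)"
proof -
  have "\<forall>k (c::'d \<Rightarrow> int). AE x in mu. key k x = c \<longrightarrow> 1 \<le> k \<longrightarrow> 0 < muA k x"
  proof (intro allI)
    fix k and c :: "'d \<Rightarrow> int"
    show "AE x in mu. key k x = c \<longrightarrow> 1 \<le> k \<longrightarrow> 0 < muA k x"
    proof (cases "\<exists>x0. key k x0 = c \<and> \<not> 0 < muA k x0")
      case True
      then obtain x0 where x0: "key k x0 = c" "\<not> 0 < muA k x0" by metis
      have "0 \<le> muA k x0" unfolding muA_def by (rule measure_nonneg)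
      then have "muA k x0 = 0" using x0(2) by linarith
      then have "cell k x0 \<in> null_sets mu" using emeasure_mu_cell[of k x0] by (simp add: null_sets_def)
      then have "AE x in mu. x \<notin> cell k x0" by (rule AE_not_in)
      then show ?thesis
      proof (rule AE_mp, intro AE_I2 impI)
        fix x assume "x \<notin> cell k x0" "key k x = c"
        then show "0 < muA k x" using x0(1) by (simp add: cell_key)
      qed
    next
      case False
      then show ?thesis by (intro AE_I2) auto
    qed
  qed
  then have "AE x in mu. \<forall>k (c::'d \<Rightarrow> int). key k x = c \<longrightarrow> 1 \<le> k \<longrightarrow> 0 < muA k x"
    unfolding AE_all_countable .
  then show ?thesis
  proof (rule AE_mp, intro AE_I2 impI)
    fix x assume "\<forall>k (c::'d \<Rightarrow> int). key k x = c \<longrightarrow> 1 \<le> k \<longrightarrow> 0 < muA k x"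
    then have "\<forall>k\<ge>1. 0 < muA k x" by auto
    then show "x \<in> pos_set M (X 0)" unfolding pos_set_def muA_def by auto
  qed
qed

lemma ennreal_tendsto_0I:
  fixes u :: "nat \<Rightarrow> ennreal"
  assumes "\<And>e. 0 < e \<Longrightarrow> eventually (\<lambda>n. u n \<le> ennreal e) sequentially"
  shows "u \<longlonglongrightarrow> 0"
  unfolding order_tendsto_iff
proof (intro conjI allI impI)
  fix a :: ennreal assume "a < 0" then show "eventually (\<lambda>n. a < u n) sequentially" by simp
next
  fix a :: ennreal assume a: "0 < a"
  show "eventually (\<lambda>n. u n < a) sequentially"
  proof (cases "a = top")
    case True
    have t: "(1::ennreal) < top" by simp
    have ev1: "eventually (\<lambda>n. u n \<le> ennreal 1) sequentially" by (rule assms) simp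
    show ?thesis using ev1
    proof (elim eventually_mono)
      fix n assume "u n \<le> ennreal 1"
      then have "u n \<le> 1" by simp
      then have "u n < top" using t by (rule order.strict_trans1)
      then show "u n < a" using True by simp
    qed
  next
    case False
    then obtain r where r: "a = ennreal r" "0 \<le> r" using ennreal_cases[of a] by auto
    then have r0: "0 < r" using a by simp
    have ev2: "eventually (\<lambda>n. u n \<le> ennreal (r/2)) sequentially" by (rule assms) (simp add: r0)
    show ?thesis using ev2
    proof (elim eventually_mono)
      fix n assume "u n \<le> ennreal (r / 2)"
      moreover have "ennreal (r/2) < ennreal r" using r0 by (simp add: ennreal_less_iff)
      ultimately show "u n < a" using r(1) by simp
    qed
  qed
qed

end

context setting
begin

lemma bounded_S:
  assumes "\<exists>r. AE \<omega> in M. norm (X 0 \<omega>) \<le> r"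
  shows "bounded (pos_set M (X 0))"
proof -
  obtain r where r: "AE \<omega> in M. norm (X 0 \<omega>) \<le> r" using assms by auto
  have "\<forall>x\<in>pos_set M (X 0). norm x \<le> r + sqrt (real CARD('d)) / 2^(1+2)"
  proof
    fix x assume x: "x \<in> pos_set M (X 0)"
    have pos: "0 < muA 1 x" using pos_muA[OF x] by simp
    have "\<exists>\<omega>\<in>space M. X 0 \<omega> \<in> cell 1 x \<and> norm (X 0 \<omega>) \<le> r"
    proof (rule ccontr)
      assume nex: "\<not> (\<exists>\<omega>\<in>space M. X 0 \<omega> \<in> cell 1 x \<and> norm (X 0 \<omega>) \<le> r)"
      have "AE \<omega> in M. X 0 \<omega> \<notin> cell 1 x" using r
      proof (rule AE_mp, intro AE_I2 impI)
        fix \<omega> assume "\<omega> \<in> space M" "norm (X 0 \<omega>) \<le> r"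
        then show "X 0 \<omega> \<notin> cell 1 x" using nex by auto
      qed
      moreover have "{\<omega>\<in>space M. X 0 \<omega> \<in> cell 1 x} \<in> sets M" by measurable
      ultimately have "emeasure M {\<omega>\<in>space M. X 0 \<omega> \<in> cell 1 x} = 0"
        using AE_iff_measurable[of "{\<omega>\<in>space M. X 0 \<omega> \<in> cell 1 x}" M "\<lambda>\<omega>. X 0 \<omega> \<notin> cell 1 x"] by simp
      then have "muA 1 x = 0" unfolding muA_def by (simp add: emeasure_eq_measure)
      then show False using pos by simp
    qed
    then obtain \<omega> where w: "X 0 \<omega> \<in> cell 1 x" "norm (X 0 \<omega>) \<le> r" by auto
    have "norm x \<le> norm (X 0 \<omega>) + norm (x - X 0 \<omega>)" by (rule norm_triangle_sub)
    also have "norm (x - X 0 \<omega>) = dist (X 0 \<omega>) x" by (simp add: dist_norm norm_minus_commute)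
    also have "dist (X 0 \<omega>) x \<le> sqrt (real CARD('d)) / 2^(1+2)" by (rule cell_dist[OF w(1)])
    finally show "norm x \<le> r + sqrt (real CARD('d)) / 2^(1+2)" using w(2) by simp
  qed
  then show ?thesis unfolding bounded_iff by blast
qed

lemma nn_int_const_mu: "(\<integral>\<^sup>+ x. ennreal e \<partial>mu) = ennreal e"
proof -
  interpret mp: prob_space mu by (rule mu_prob)
  have "emeasure mu UNIV = 1" using mp.emeasure_space_1 by simp
  then show ?thesis by simp
qed

lemma part_c1:
  assumes N1: "\<forall>n. N n \<ge> 1" and Nlim: "filterlim N at_top sequentially"
    and r: "\<exists>r. AE \<omega> in M. norm (X 0 \<omega>) \<le> r"
  shows "AE \<omega> in M. (\<lambda>n. \<integral>\<^sup>+ x. ennreal ((m_hat X Y L (N n) n \<omega> x - m x)^2) \<partial>mu) \<longlonglongrightarrow> 0"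
  using part_b[OF N1 Nlim bounded_S[OF r]]
proof (rule AE_mp, intro AE_I2 impI)
  fix \<omega> assume ul: "uniform_limit (pos_set M (X 0)) (\<lambda>n x. m_hat X Y L (N n) n \<omega> x) m sequentially"
  show "(\<lambda>n. \<integral>\<^sup>+ x. ennreal ((m_hat X Y L (N n) n \<omega> x - m x)^2) \<partial>mu) \<longlonglongrightarrow> 0"
  proof (rule ennreal_tendsto_0I)
    fix e :: real assume e: "0 < e"
    have "eventually (\<lambda>n. \<forall>x\<in>pos_set M (X 0). dist (m_hat X Y L (N n) n \<omega> x) (m x) < sqrt e) sequentially"
      using ul e unfolding uniform_limit_iff by simp
    then show "eventually (\<lambda>n. (\<integral>\<^sup>+ x. ennreal ((m_hat X Y L (N n) n \<omega> x - m x)^2) \<partial>mu) \<le> ennreal e) sequentially"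
    proof (rule eventually_mono)
      fix n assume h: "\<forall>x\<in>pos_set M (X 0). dist (m_hat X Y L (N n) n \<omega> x) (m x) < sqrt e"
      have "(\<integral>\<^sup>+ x. ennreal ((m_hat X Y L (N n) n \<omega> x - m x)^2) \<partial>mu) \<le> (\<integral>\<^sup>+ x. ennreal e \<partial>mu)"
        using AE_mu_S
      proof (rule nn_integral_mono_AE[OF AE_mp], intro AE_I2 impI)
        fix x assume "x \<in> pos_set M (X 0)"
        then have a: "\<bar>m_hat X Y L (N n) n \<omega> x - m x\<bar> < sqrt e" using h by (simp add: dist_real_def)
        have "\<bar>m_hat X Y L (N n) n \<omega> x - m x\<bar>^2 < (sqrt e)^2"
          using a by (intro power_strict_mono) auto
        then have "(m_hat X Y L (N n) n \<omega> x - m x)^2 \<le> e" using e by simp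
        then show "ennreal ((m_hat X Y L (N n) n \<omega> x - m x)^2) \<le> ennreal e" by (rule ennreal_leI)
      qed
      then show "(\<integral>\<^sup>+ x. ennreal ((m_hat X Y L (N n) n \<omega> x - m x)^2) \<partial>mu) \<le> ennreal e"
        unfolding nn_int_const_mu .
    qed
  qed
qed

end

context setting
begin

lemma cm_lim:
  assumes x: "x \<in> pos_set M (X 0)"
  shows "(\<lambda>k. cell_mean M (X 0) (Y 0) (k+1) x) \<longlonglongrightarrow> m x"
proof -
  define a where "a k = cell_mean M (X 0) (Y 0) (k+1) x" for k
  have ab: "\<bar>a k - m x\<bar> \<le> Cs / 2^(k+3)" for k
  proof -
    have h: "\<bar>cell_mean M (X 0) (Y 0) (k+1) x - m x\<bar> \<le> Cs / 2^(k+1+2)"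
      by (rule cm_close[OF pos_muA[OF x]]) simp
    have eq: "k + 1 + 2 = k + 3" by simp
    show ?thesis unfolding a_def using h unfolding eq .
  qed
  have "(\<lambda>k. a k - m x) \<longlonglongrightarrow> 0"
  proof (rule Lim_null_comparison)
    show "eventually (\<lambda>k. norm (a k - m x) \<le> Cs / 8 * (1/2)^k) sequentially"
    proof (intro always_eventually allI)
      fix k
      have e: "Cs / 2^(k+3) = Cs / 8 * (1/2)^k" by (simp add: power_add field_simps)
      show "norm (a k - m x) \<le> Cs / 8 * (1/2)^k" using ab[of k] unfolding e[symmetric] real_norm_def .
    qed
    show "(\<lambda>k. Cs / 8 * (1/2::real)^k) \<longlonglongrightarrow> 0"
      by (intro tendsto_mult_right_zero LIMSEQ_realpow_zero) auto
  qed
  then show ?thesis unfolding a_def by (simp add: LIM_zero_iff)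
qed

lemma AE_Y_bound:
  assumes D: "AE \<omega> in M. \<bar>Y 0 \<omega>\<bar> \<le> D"
  shows "AE \<omega> in M. \<forall>j. \<bar>Y j \<omega>\<bar> \<le> D"
proof -
  have [measurable]: "snd \<in> borel_measurable (borel :: ((real^'d) \<times> real) measure)" by (rule snd_borel)
  have Qm: "{p::(real^'d) \<times> real. \<bar>snd p\<bar> \<le> D} \<in> sets borel" by measurable
  have "\<forall>j. AE \<omega> in M. \<bar>snd (X j \<omega>, Y j \<omega>)\<bar> \<le> D"
  proof
    fix j
    show "AE \<omega> in M. \<bar>snd (X j \<omega>, Y j \<omega>)\<bar> \<le> D"
      by (rule stationary_marginal[OF M st er Qm]) (use D in simp)
  qed
  then show ?thesis unfolding AE_all_countable[symmetric] by simp
qed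

lemma D_nonneg:
  assumes D: "AE \<omega> in M. \<bar>Y 0 \<omega>\<bar> \<le> D"
  shows "0 \<le> D"
proof (rule ccontr)
  assume "\<not> 0 \<le> D"
  then have "AE \<omega> in M. False" using D by (rule_tac AE_mp) (auto intro!: AE_I2)
  then show False by simp
qed

lemma cm_bound:
  assumes D: "AE \<omega> in M. \<bar>Y 0 \<omega>\<bar> \<le> D" and pos: "0 < muA k x"
  shows "\<bar>cell_mean M (X 0) (Y 0) k x\<bar> \<le> D"
proof -
  define ind where "ind = (\<lambda>\<omega>. indicator (cell k x) (X 0 \<omega>) :: real)"
  have im: "ind \<in> borel_measurable M" unfolding ind_def by measurable
  have iind: "integrable M ind"
    by (rule integrable_const_bound[where B=1]) (auto simp: ind_def indicator_def im)
  have "\<bar>\<integral>\<omega>. ind \<omega> * Y 0 \<omega> \<partial>M\<bar> \<le> (\<integral>\<omega>. norm (ind \<omega> * Y 0 \<omega>) \<partial>M)"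
    using integral_norm_bound[of M "\<lambda>\<omega>. ind \<omega> * Y 0 \<omega>"] by simp
  also have "\<dots> \<le> (\<integral>\<omega>. ind \<omega> * D \<partial>M)"
  proof (rule integral_mono_AE)
    show "integrable M (\<lambda>\<omega>. norm (ind \<omega> * Y 0 \<omega>))" using int_indY[of k x] unfolding ind_def by (rule integrable_norm)
    show "integrable M (\<lambda>\<omega>. ind \<omega> * D)" using iind by simp
    show "AE \<omega> in M. norm (ind \<omega> * Y 0 \<omega>) \<le> ind \<omega> * D"
      using D by (rule AE_mp) (intro AE_I2 impI, auto simp: ind_def indicator_def)
  qed
  also have "\<dots> = D * muA k x" using muA_integral[of k x] unfolding ind_def by simp
  finally have b: "\<bar>\<integral>\<omega>. ind \<omega> * Y 0 \<omega> \<partial>M\<bar> \<le> D * muA k x" .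
  have "\<bar>cell_mean M (X 0) (Y 0) k x\<bar> = \<bar>\<integral>\<omega>. ind \<omega> * Y 0 \<omega> \<partial>M\<bar> / muA k x"
    unfolding cell_mean_def muA_def[symmetric] ind_def using pos by simp
  also have "\<dots> \<le> D * muA k x / muA k x" using b pos by (intro divide_right_mono) auto
  also have "\<dots> = D" using pos by simp
  finally show ?thesis .
qed

lemma m_bound:
  assumes D: "AE \<omega> in M. \<bar>Y 0 \<omega>\<bar> \<le> D" and x: "x \<in> pos_set M (X 0)"
  shows "\<bar>m x\<bar> \<le> D"
proof -
  have "(\<lambda>k. \<bar>cell_mean M (X 0) (Y 0) (k+1) x\<bar>) \<longlonglongrightarrow> \<bar>m x\<bar>" by (intro tendsto_rabs cm_lim[OF x])
  moreover have "\<forall>k. \<bar>cell_mean M (X 0) (Y 0) (k+1) x\<bar> \<le> D"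
    using cm_bound[OF D pos_muA[OF x]] by simp
  ultimately show ?thesis by (intro LIMSEQ_le_const2) auto
qed

lemma emp_bound:
  assumes Yb: "\<forall>j. \<bar>Y j \<omega>\<bar> \<le> D" and D0: "0 \<le> D"
  shows "\<bar>emp_mean X Y k n \<omega> x\<bar> \<le> D"
proof -
  define S2 where "S2 = (\<Sum>j<n. indicator (cell k x) (X j \<omega>) :: real)"
  define S1 where "S1 = (\<Sum>j<n. Y j \<omega> * indicator (cell k x) (X j \<omega>))"
  have S20: "0 \<le> S2" unfolding S2_def by (intro sum_nonneg) simp
  have "\<bar>S1\<bar> \<le> (\<Sum>j<n. \<bar>Y j \<omega> * indicator (cell k x) (X j \<omega>)\<bar>)" unfolding S1_def by (rule sum_abs)
  also have "\<dots> \<le> (\<Sum>j<n. D * indicator (cell k x) (X j \<omega>))"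
    by (intro sum_mono) (use Yb in \<open>auto simp: indicator_def\<close>)
  also have "\<dots> = D * S2" unfolding S2_def by (simp add: sum_distrib_left)
  finally have b: "\<bar>S1\<bar> \<le> D * S2" .
  show ?thesis
  proof (cases "S2 = 0")
    case True then show ?thesis unfolding emp_mean_def S1_def[symmetric] S2_def[symmetric] using D0 by simp
  next
    case False
    then have p: "0 < S2" using S20 by simp
    have "\<bar>S1 / S2\<bar> = \<bar>S1\<bar> / S2" using p by simp
    also have "\<dots> \<le> D * S2 / S2" using b p by (intro divide_right_mono) auto
    also have "\<dots> = D" using p by simp
    finally show ?thesis unfolding emp_mean_def S1_def[symmetric] S2_def[symmetric] .
  qed
qed

definition Bs where "Bs = (\<Sum>k. L / 2^(k+2))"

lemma hat_bound:
  assumes Yb: "\<forall>j. \<bar>Y j \<omega>\<bar> \<le> D" and D0: "0 \<le> D" and N1: "1 \<le> N n"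
  shows "\<bar>m_hat X Y L (N n) n \<omega> x\<bar> \<le> D + Bs"
proof -
  have "\<bar>suminf (Fterm N \<omega> n x)\<bar> \<le> Bs"
    unfolding Bs_def using norm_suminf_le[of "Fterm N \<omega> n x" "\<lambda>k. L / 2^(k+2)"] Fterm_bound summable_b by simp
  moreover have "\<bar>emp_mean X Y 1 n \<omega> x\<bar> \<le> D" by (rule emp_bound[OF Yb D0])
  ultimately show ?thesis unfolding m_hat_split[of N n, OF N1] by linarith
qed

lemma emp_mean_alt:
  "(\<lambda>x. emp_mean X Y k n \<omega> x) = (\<lambda>x. (\<Sum>j<n. Y j \<omega> * indicator (cell k (X j \<omega>)) x) / (\<Sum>j<n. indicator (cell k (X j \<omega>)) x))"
proof -
  have "\<And>x j. (indicator (cell k x) (X j \<omega>) :: real) = indicator (cell k (X j \<omega>)) x"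
    by (simp add: indicator_def cell_sym)
  then show ?thesis unfolding emp_mean_def by simp
qed

lemma emp_mean_meas[measurable]: "(\<lambda>x. emp_mean X Y k n \<omega> x) \<in> borel_measurable borel"
  unfolding emp_mean_alt by measurable

lemma m_hat_meas: "(\<lambda>x. m_hat X Y L Nn n \<omega> x) \<in> borel_measurable borel"
  unfolding m_hat_def clip_clamp[OF L0] clamp_def by measurable

lemma part_c2:
  assumes N1: "\<forall>n. N n \<ge> 1" and Nlim: "filterlim N at_top sequentially"
    and D: "AE \<omega> in M. \<bar>Y 0 \<omega>\<bar> \<le> D"
  shows "AE \<omega> in M. (\<lambda>n. \<integral>\<^sup>+ x. ennreal ((m_hat X Y L (N n) n \<omega> x - m x)^2) \<partial>mu) \<longlonglongrightarrow> 0"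
  using part_a[OF N1 Nlim] AE_Y_bound[OF D]
proof eventually_elim
  case (elim \<omega>)
  have D0: "0 \<le> D" by (rule D_nonneg[OF D])
  define W where "W = (2 * D + Bs)^2"
  have "(\<lambda>n. \<integral>\<^sup>+ x. norm ((\<lambda>x. 0::real) x - (m_hat X Y L (N n) n \<omega> x - m x)^2) \<partial>mu) \<longlonglongrightarrow> 0"
  proof (rule nn_integral_dominated_convergence_norm[where w="\<lambda>x. W"])
    fix n
    have "(\<lambda>x. m_hat X Y L (N n) n \<omega> x) \<in> borel_measurable borel" by (rule m_hat_meas)
    then show "(\<lambda>x. (m_hat X Y L (N n) n \<omega> x - m x)^2) \<in> borel_measurable mu" by simp
  next
    show "(\<lambda>x. 0::real) \<in> borel_measurable mu" by simp
    show "(\<lambda>x. W) \<in> borel_measurable mu" by simp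
  next
    fix n
    show "AE x in mu. norm ((m_hat X Y L (N n) n \<omega> x - m x)^2) \<le> W"
      using AE_mu_S
    proof (rule AE_mp, intro AE_I2 impI)
      fix x assume x: "x \<in> pos_set M (X 0)"
      have h1: "\<bar>m_hat X Y L (N n) n \<omega> x\<bar> \<le> D + Bs" using hat_bound[OF elim(2) D0] N1 by simp
      have h2: "\<bar>m x\<bar> \<le> D" by (rule m_bound[OF D x])
      have "\<bar>m_hat X Y L (N n) n \<omega> x - m x\<bar> \<le> 2 * D + Bs" using h1 h2 by linarith
      then have "\<bar>m_hat X Y L (N n) n \<omega> x - m x\<bar>^2 \<le> (2 * D + Bs)^2" by (intro power_mono) auto
      then show "norm ((m_hat X Y L (N n) n \<omega> x - m x)^2) \<le> W" unfolding W_def by simp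
    qed
  next
    show "(\<integral>\<^sup>+ x. W \<partial>mu) < \<infinity>" using nn_int_const_mu[of W] by simp
  next
    show "AE x in mu. (\<lambda>n. (m_hat X Y L (N n) n \<omega> x - m x)^2) \<longlonglongrightarrow> 0"
      using AE_mu_S
    proof (rule AE_mp, intro AE_I2 impI)
      fix x assume x: "x \<in> pos_set M (X 0)"
      have "(\<lambda>n. m_hat X Y L (N n) n \<omega> x) \<longlonglongrightarrow> m x" using elim(1) x by simp
      then have "(\<lambda>n. (m_hat X Y L (N n) n \<omega> x - m x)^2) \<longlonglongrightarrow> (m x - m x)^2"
        by (intro tendsto_intros)
      then show "(\<lambda>n. (m_hat X Y L (N n) n \<omega> x - m x)^2) \<longlonglongrightarrow> 0" by simp
    qed
  qed
  then show ?case by simp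
qed

end

theorem corollary1:
  fixes M :: "'a measure"
    and X :: "nat \<Rightarrow> 'a \<Rightarrow> real^'d"
    and Y :: "nat \<Rightarrow> 'a \<Rightarrow> real"
    and m :: "real^'d \<Rightarrow> real"
    and C L :: real
    and N :: "nat \<Rightarrow> nat"
  assumes "prob_space M"
    and "stationary_process M (\<lambda>i \<omega>. (X i \<omega>, Y i \<omega>))"
    and "ergodic_process M (\<lambda>i \<omega>. (X i \<omega>, Y i \<omega>))"
    and "integrable M (Y 0)"
    and "AE \<omega> in M. real_cond_exp M (vimage_algebra (space M) (X 0) borel) (Y 0) \<omega> = m (X 0 \<omega>)"
    and "C-lipschitz_on UNIV m"
    and "L \<ge> C * sqrt (real CARD('d))"
    and "mono N" and "\<forall>n. N n \<ge> 1" and "filterlim N at_top sequentially"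
  shows "(\<forall>x \<in> pos_set M (X 0). m_L M (X 0) (Y 0) L x = m x)
    \<and> (AE \<omega> in M. \<forall>x \<in> pos_set M (X 0). (\<lambda>n. m_hat X Y L (N n) n \<omega> x) \<longlonglongrightarrow> m x)
    \<and> (bounded (pos_set M (X 0)) \<longrightarrow>
         (AE \<omega> in M. uniform_limit (pos_set M (X 0)) (\<lambda>n x. m_hat X Y L (N n) n \<omega> x) m sequentially))
    \<and> (((\<exists>D. AE \<omega> in M. \<bar>Y 0 \<omega>\<bar> \<le> D) \<or> (\<exists>r. AE \<omega> in M. norm (X 0 \<omega>) \<le> r)) \<longrightarrow>
         (AE \<omega> in M. (\<lambda>n. \<integral>\<^sup>+ x. ennreal ((m_hat X Y L (N n) n \<omega> x - m x)^2) \<partial>(distr M borel (X 0)))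
            \<longlonglongrightarrow> 0))"
proof -
  interpret setting M X Y m C L by (rule setting.intro[OF assms(1-7)])
  show ?thesis
  proof (intro conjI impI)
    show "\<forall>x \<in> pos_set M (X 0). m_L M (X 0) (Y 0) L x = m x" using mL_eq by auto
    show "AE \<omega> in M. \<forall>x \<in> pos_set M (X 0). (\<lambda>n. m_hat X Y L (N n) n \<omega> x) \<longlonglongrightarrow> m x"
      by (rule part_a[OF assms(9) assms(10)])
    assume "bounded (pos_set M (X 0))"
    then show "AE \<omega> in M. uniform_limit (pos_set M (X 0)) (\<lambda>n x. m_hat X Y L (N n) n \<omega> x) m sequentially"
      by (rule part_b[OF assms(9) assms(10)])
  next
    assume "(\<exists>D. AE \<omega> in M. \<bar>Y 0 \<omega>\<bar> \<le> D) \<or> (\<exists>r. AE \<omega> in M. norm (X 0 \<omega>) \<le> r)"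
    then show "AE \<omega> in M. (\<lambda>n. \<integral>\<^sup>+ x. ennreal ((m_hat X Y L (N n) n \<omega> x - m x)^2) \<partial>(distr M borel (X 0))) \<longlonglongrightarrow> 0"
    proof
      assume "\<exists>D. AE \<omega> in M. \<bar>Y 0 \<omega>\<bar> \<le> D"
      then obtain D where "AE \<omega> in M. \<bar>Y 0 \<omega>\<bar> \<le> D" by auto
      then show ?thesis by (rule part_c2[OF assms(9) assms(10)])
    next
      assume "\<exists>r. AE \<omega> in M. norm (X 0 \<omega>) \<le> r"
      then show ?thesis by (rule part_c1[OF assms(9) assms(10)])
    qed
  qed
qed

end
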